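(* Let $M$ be a finite monoid. The assignment $\mathfrak m\mapsto \mathbf{Sh}(\mathcal F_{\mathfrak m})$ is a bijection from the set $\mathscr{II}(M)$ of two-sided idempotent ideals of $M$ (including $\emptyset$) onto the set $\mathfrak{Loc}(\mathscr{Sets}_M)$ of localising subcategories of the topos $\mathscr{Sets}_M$ of right $M$-sets. In particular $|\mathfrak{Loc}(\mathscr{Sets}_M)|=|\mathfrak{Loc}(\mathscr{Sets}_{M^{op}})|$ is finite.
   Context: A two-sided ideal $\mathfrak m$ is idempotent if $\mathfrak m=\mathfrak m^2:=\{xy\mid x,y\in\mathfrak m\}$. $\mathcal F_{\mathfrak m}$ is the set of right ideals of $M$ containing $\mathfrak m$; it is a Grothendieck topology on $M$ (a set $\mathcal F$ of right ideals with (T1) $M\in\mathcal F$; (T2) $\mathfrak a\in\mathcal F\Rightarrow(\mathfrak a:m)\in\mathcal F$ for all $m$, where $(\mathfrak a:m)=\{x\mid mx\in\mathfrak a\}$; (T3) if $\mathfrak b\in\mathcal F$ and $(\mathfrak a:b)\in\mathcal F$ for all $b\in\mathfrak b$ then $\mathfrak a\in\mathcal F$). A right $M$-set $X$ is an $\mathcal F$-sheaf if $X\to\mathrm{Hom}_M(\mathfrak a,X)$, $x\mapsto(y\mapsto xy)$, is bijective for all $\mathfrak a\in\mathcal F$; $\mathbf{Sh}(\mathcal F)$ is the full subcategory of sheaves. A localising subcategory of a topos $\mathscr E$ is a full, replete subcategory whose inclusion has a left adjoint preserving finite limits. *)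

theory Defs
  imports "HOL-Algebra.Group"
begin

text \<open>A right M-set is represented as a pair (carrier, action); the carrier of an
  object of the category lives in a fixed (universe) type 'u.\<close>

type_synonym ('x,'m) mobj = "'x set \<times> ('x \<Rightarrow> 'm \<Rightarrow> 'x)"

definition rmset :: "('m,'b) monoid_scheme \<Rightarrow> ('x,'m) mobj \<Rightarrow> bool" where
  "rmset M A \<longleftrightarrow>
     (\<forall>x\<in>fst A. \<forall>m\<in>carrier M. snd A x m \<in> fst A) \<and>
     (\<forall>x\<in>fst A. snd A x \<one>\<^bsub>M\<^esub> = x) \<and>
     (\<forall>x\<in>fst A. \<forall>m\<in>carrier M. \<forall>n\<in>carrier M.
         snd A x (m \<otimes>\<^bsub>M\<^esub> n) = snd A (snd A x m) n)"

definition mhom :: "('m,'b) monoid_scheme \<Rightarrow> ('x,'m) mobj \<Rightarrow> ('y,'m) mobj \<Rightarrow> ('x \<Rightarrow> 'y) \<Rightarrow> bool" where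
  "mhom M A B f \<longleftrightarrow>
     (\<forall>x\<in>fst A. f x \<in> fst B) \<and>
     (\<forall>x\<in>fst A. \<forall>m\<in>carrier M. f (snd A x m) = snd B (f x) m)"

definition miso :: "('m,'b) monoid_scheme \<Rightarrow> ('x,'m) mobj \<Rightarrow> ('y,'m) mobj \<Rightarrow> bool" where
  "miso M A B \<longleftrightarrow> (\<exists>f g. mhom M A B f \<and> mhom M B A g \<and>
       (\<forall>x\<in>fst A. g (f x) = x) \<and> (\<forall>y\<in>fst B. f (g y) = y))"

text \<open>A full replete subcategory: a class of objects closed under isomorphism
  (fullness is automatic, all morphisms between its objects are taken).\<close>
definition full_replete :: "('m,'b) monoid_scheme \<Rightarrow> ('x,'m) mobj set \<Rightarrow> bool" where
  "full_replete M L \<longleftrightarrow> L \<subseteq> {A. rmset M A} \<and>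
     (\<forall>A B. A \<in> L \<longrightarrow> rmset M B \<longrightarrow> miso M A B \<longrightarrow> B \<in> L)"

definition is_reflection :: "('m,'b) monoid_scheme \<Rightarrow> ('x,'m) mobj set
    \<Rightarrow> (('x,'m) mobj \<Rightarrow> ('x,'m) mobj) \<Rightarrow> (('x,'m) mobj \<Rightarrow> 'x \<Rightarrow> 'x) \<Rightarrow> bool" where
  "is_reflection M L R \<eta> \<longleftrightarrow> (\<forall>A. rmset M A \<longrightarrow>
     R A \<in> L \<and> mhom M A (R A) (\<eta> A) \<and>
     (\<forall>B\<in>L. \<forall>f. mhom M A B f \<longrightarrow>
        (\<exists>g. mhom M (R A) B g \<and> (\<forall>x\<in>fst A. g (\<eta> A x) = f x) \<and>
           (\<forall>g'. mhom M (R A) B g' \<and> (\<forall>x\<in>fst A. g' (\<eta> A x) = f x)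
                 \<longrightarrow> (\<forall>y\<in>fst (R A). g' y = g y)))))"

definition refl_mor :: "('m,'b) monoid_scheme \<Rightarrow> (('x,'m) mobj \<Rightarrow> ('x,'m) mobj)
    \<Rightarrow> (('x,'m) mobj \<Rightarrow> 'x \<Rightarrow> 'x) \<Rightarrow> ('x,'m) mobj \<Rightarrow> ('x,'m) mobj \<Rightarrow> ('x \<Rightarrow> 'x) \<Rightarrow> 'x \<Rightarrow> 'x" where
  "refl_mor M R \<eta> A A' h = (SOME g. mhom M (R A) (R A') g \<and>
       (\<forall>x\<in>fst A. g (\<eta> A x) = \<eta> A' (h x)))"

definition is_terminal :: "('m,'b) monoid_scheme \<Rightarrow> ('x,'m) mobj \<Rightarrow> bool" where
  "is_terminal M T \<longleftrightarrow> rmset M T \<and>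
     (\<forall>A::('x,'m) mobj. rmset M A \<longrightarrow> (\<exists>f. mhom M A T f) \<and>
        (\<forall>f g. mhom M A T f \<longrightarrow> mhom M A T g \<longrightarrow> (\<forall>x\<in>fst A. f x = g x)))"

definition is_pullback :: "('m,'b) monoid_scheme \<Rightarrow> ('x,'m) mobj \<Rightarrow> ('x \<Rightarrow> 'x) \<Rightarrow> ('x \<Rightarrow> 'x)
    \<Rightarrow> ('x,'m) mobj \<Rightarrow> ('x,'m) mobj \<Rightarrow> ('x,'m) mobj \<Rightarrow> ('x \<Rightarrow> 'x) \<Rightarrow> ('x \<Rightarrow> 'x) \<Rightarrow> bool" where
  "is_pullback M P p1 p2 A B C f g \<longleftrightarrow>
     rmset M P \<and> rmset M A \<and> rmset M B \<and> rmset M C \<and>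
     mhom M P A p1 \<and> mhom M P B p2 \<and> mhom M A C f \<and> mhom M B C g \<and>
     (\<forall>x\<in>fst P. f (p1 x) = g (p2 x)) \<and>
     (\<forall>(Q::('x,'m) mobj) q1 q2. rmset M Q \<and> mhom M Q A q1 \<and> mhom M Q B q2 \<and>
          (\<forall>x\<in>fst Q. f (q1 x) = g (q2 x)) \<longrightarrow>
        (\<exists>u. mhom M Q P u \<and> (\<forall>x\<in>fst Q. p1 (u x) = q1 x \<and> p2 (u x) = q2 x) \<and>
           (\<forall>u'. mhom M Q P u' \<and> (\<forall>x\<in>fst Q. p1 (u' x) = q1 x \<and> p2 (u' x) = q2 x)
                 \<longrightarrow> (\<forall>x\<in>fst Q. u' x = u x))))"

text \<open>Localising subcategory: full, replete, and the inclusion has a left adjoint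
  preserving finite limits (= preserving the terminal object and pullbacks).\<close>
definition localising :: "('m,'b) monoid_scheme \<Rightarrow> ('x,'m) mobj set \<Rightarrow> bool" where
  "localising M L \<longleftrightarrow> full_replete M L \<and>
     (\<exists>R \<eta>. is_reflection M L R \<eta> \<and>
        (\<forall>T. is_terminal M T \<longrightarrow> is_terminal M (R T)) \<and>
        (\<forall>P p1 p2 A B C f g. is_pullback M P p1 p2 A B C f g \<longrightarrow>
            is_pullback M (R P) (refl_mor M R \<eta> P A p1) (refl_mor M R \<eta> P B p2)
              (R A) (R B) (R C) (refl_mor M R \<eta> A C f) (refl_mor M R \<eta> B C g)))"

definition Loc :: "('m,'b) monoid_scheme \<Rightarrow> ('x,'m) mobj set set" where
  "Loc M = {L. localising M L}"

definition right_ideal :: "('m,'b) monoid_scheme \<Rightarrow> 'm set \<Rightarrow> bool" where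
  "right_ideal M a \<longleftrightarrow> a \<subseteq> carrier M \<and> (\<forall>x\<in>a. \<forall>m\<in>carrier M. x \<otimes>\<^bsub>M\<^esub> m \<in> a)"

definition two_sided_ideal :: "('m,'b) monoid_scheme \<Rightarrow> 'm set \<Rightarrow> bool" where
  "two_sided_ideal M a \<longleftrightarrow> right_ideal M a \<and> (\<forall>x\<in>a. \<forall>m\<in>carrier M. m \<otimes>\<^bsub>M\<^esub> x \<in> a)"

definition idem_ideals :: "('m,'b) monoid_scheme \<Rightarrow> 'm set set" where
  "idem_ideals M = {a. two_sided_ideal M a \<and> a = {x \<otimes>\<^bsub>M\<^esub> y | x y. x \<in> a \<and> y \<in> a}}"

definition topF :: "('m,'b) monoid_scheme \<Rightarrow> 'm set \<Rightarrow> 'm set set" where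
  "topF M m = {a. right_ideal M a \<and> m \<subseteq> a}"

text \<open>F-sheaves: X \<rightarrow> Hom_M(a, X), x \<mapsto> (y \<mapsto> xy), bijective for all a \<in> F
  (morphisms compared extensionally on a).\<close>
definition is_sheaf :: "('m,'b) monoid_scheme \<Rightarrow> 'm set set \<Rightarrow> ('x,'m) mobj \<Rightarrow> bool" where
  "is_sheaf M F A \<longleftrightarrow> rmset M A \<and> (\<forall>a\<in>F.
     (\<forall>x\<in>fst A. \<forall>x'\<in>fst A. (\<forall>y\<in>a. snd A x y = snd A x' y) \<longrightarrow> x = x') \<and>
     (\<forall>\<phi>. mhom M (a, mult M) A \<phi> \<longrightarrow> (\<exists>x\<in>fst A. \<forall>y\<in>a. \<phi> y = snd A x y)))"

definition Sh :: "('m,'b) monoid_scheme \<Rightarrow> 'm set set \<Rightarrow> ('x,'m) mobj set" where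
  "Sh M F = {A. is_sheaf M F A}"

definition opm :: "('m,'b) monoid_scheme \<Rightarrow> ('m,'b) monoid_scheme" where
  "opm M = M\<lparr>mult := (\<lambda>x y. y \<otimes>\<^bsub>M\<^esub> x)\<rparr>"

end

theory Submission
  imports Defs
begin

lemma rmsetD:
  assumes "rmset M A"
  shows "\<And>x m. x \<in> fst A \<Longrightarrow> m \<in> carrier M \<Longrightarrow> snd A x m \<in> fst A"
    and "\<And>x. x \<in> fst A \<Longrightarrow> snd A x \<one>\<^bsub>M\<^esub> = x"
    and "\<And>x m n. x \<in> fst A \<Longrightarrow> m \<in> carrier M \<Longrightarrow> n \<in> carrier M \<Longrightarrow>
         snd A x (m \<otimes>\<^bsub>M\<^esub> n) = snd A (snd A x m) n"
  using assms unfolding rmset_def by blast+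

lemma mhomD:
  assumes "mhom M A B f"
  shows "\<And>x. x \<in> fst A \<Longrightarrow> f x \<in> fst B"
    and "\<And>x m. x \<in> fst A \<Longrightarrow> m \<in> carrier M \<Longrightarrow> f (snd A x m) = snd B (f x) m"
  using assms unfolding mhom_def by blast+

lemma mhom_comp:
  "mhom M A B f \<Longrightarrow> mhom M B C g \<Longrightarrow> mhom M A C (\<lambda>x. g (f x))"
  unfolding mhom_def by auto

lemma mhom_id: "rmset M A \<Longrightarrow> mhom M A A (\<lambda>x. x)"
  unfolding mhom_def rmset_def by auto

lemma mhom_cong: "rmset M A \<Longrightarrow> mhom M A B f \<Longrightarrow> (\<And>x. x \<in> fst A \<Longrightarrow> f x = g x) \<Longrightarrow> mhom M A B g"
  unfolding mhom_def rmset_def by auto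

lemma miso_rmset:
  assumes "miso M A B" "rmset M A" "monoid M"
  shows "rmset M B"
proof -
  obtain f g where f: "mhom M A B f" and g: "mhom M B A g"
    and gf: "\<forall>x\<in>fst A. g (f x) = x" and fg: "\<forall>y\<in>fst B. f (g y) = y"
    using assms(1) unfolding miso_def by blast
  note A = rmsetD[OF assms(2)]
  have one: "\<one>\<^bsub>M\<^esub> \<in> carrier M" using assms(3) by (simp add: monoid.one_closed)
  have mc: "\<And>m n. m \<in> carrier M \<Longrightarrow> n \<in> carrier M \<Longrightarrow> m \<otimes>\<^bsub>M\<^esub> n \<in> carrier M"
    using assms(3) by (simp add: monoid.m_closed)
  have act: "\<And>y m. y \<in> fst B \<Longrightarrow> m \<in> carrier M \<Longrightarrow> snd B y m = f (snd A (g y) m)"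
    by (metis fg f g mhomD)
  show ?thesis unfolding rmset_def
  proof (intro conjI ballI)
    fix y m assume y: "y \<in> fst B" and m: "m \<in> carrier M"
    show "snd B y m \<in> fst B" using act[OF y m] mhomD(1)[OF f] A(1) mhomD(1)[OF g y] m by simp
  next
    fix y assume y: "y \<in> fst B"
    show "snd B y \<one>\<^bsub>M\<^esub> = y" using act[OF y one] A(2) mhomD(1)[OF g y] fg y by simp
  next
    fix y m n assume y: "y \<in> fst B" and m: "m \<in> carrier M" and n: "n \<in> carrier M"
    have "snd B y (m \<otimes>\<^bsub>M\<^esub> n) = f (snd A (snd A (g y) m) n)"
      using act[OF y mc[OF m n]] A(3) mhomD(1)[OF g y] m n by simp
    also have "\<dots> = snd B (snd B y m) n"
    proof -
      have ym: "snd B y m = f (snd A (g y) m)" using act[OF y m] .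
      have "snd A (g y) m \<in> fst A" using A(1) mhomD(1)[OF g y] m by simp
      hence "g (snd B y m) = snd A (g y) m" using ym gf by simp
      moreover have "snd B y m \<in> fst B" using ym mhomD(1)[OF f] \<open>snd A (g y) m \<in> fst A\<close> by simp
      ultimately show ?thesis using act[of "snd B y m" n] n by simp
    qed
    finally show "snd B y (m \<otimes>\<^bsub>M\<^esub> n) = snd B (snd B y m) n" .
  qed
qed




definition tr :: "('x \<Rightarrow> 'y) \<Rightarrow> ('x,'m) mobj \<Rightarrow> ('y,'m) mobj" where
  "tr f A = (f ` fst A, \<lambda>u s. f (snd A (inv_into (fst A) f u) s))"

lemma tr_fst[simp]: "fst (tr f A) = f ` fst A" by (simp add: tr_def)

lemma tr_act: "inj_on f (fst A) \<Longrightarrow> x \<in> fst A \<Longrightarrow> snd (tr f A) (f x) s = f (snd A x s)"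
  by (simp add: tr_def)

lemma tr_hom1: "inj_on f (fst A) \<Longrightarrow> rmset M A \<Longrightarrow> mhom M A (tr f A) f"
  unfolding mhom_def by (simp add: tr_act)

lemma tr_hom2: "inj_on f (fst A) \<Longrightarrow> rmset M A \<Longrightarrow> mhom M (tr f A) A (inv_into (fst A) f)"
  unfolding mhom_def by (auto simp: tr_act dest: rmsetD(1))

lemma tr_iso: "inj_on f (fst A) \<Longrightarrow> rmset M A \<Longrightarrow> miso M A (tr f A)"
  unfolding miso_def
  apply (rule exI[of _ f], rule exI[of _ "inv_into (fst A) f"])
  by (simp add: tr_hom1 tr_hom2 inv_into_f_f f_inv_into_f)

lemma miso_sym: "miso M A B \<Longrightarrow> miso M B A"
  unfolding miso_def by blast

lemma tr_rmset: "inj_on f (fst A) \<Longrightarrow> rmset M A \<Longrightarrow> monoid M \<Longrightarrow> rmset M (tr f A)"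
  using tr_iso miso_rmset by blast

lemma sheaf_iso:
  assumes "miso M A B" "is_sheaf M F A" "monoid M" "\<forall>a\<in>F. a \<subseteq> carrier M"
  shows "is_sheaf M F B"
proof -
  obtain f g where f: "mhom M A B f" and g: "mhom M B A g"
    and gf: "\<forall>x\<in>fst A. g (f x) = x" and fg: "\<forall>y\<in>fst B. f (g y) = y"
    using assms(1) unfolding miso_def by blast
  have rA: "rmset M A" using assms(2) unfolding is_sheaf_def by blast
  have rB: "rmset M B" using miso_rmset[OF assms(1) rA assms(3)] .
  have shA: "\<forall>a\<in>F.
     (\<forall>x\<in>fst A. \<forall>x'\<in>fst A. (\<forall>y\<in>a. snd A x y = snd A x' y) \<longrightarrow> x = x') \<and>
     (\<forall>\<phi>. mhom M (a, mult M) A \<phi> \<longrightarrow> (\<exists>x\<in>fst A. \<forall>y\<in>a. \<phi> y = snd A x y))"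
    using assms(2) unfolding is_sheaf_def by blast
  show ?thesis unfolding is_sheaf_def
  proof (intro conjI rB ballI allI impI)
    fix a x x' assume a: "a \<in> F" and x: "x \<in> fst B" and x': "x' \<in> fst B"
      and eq: "\<forall>y\<in>a. snd B x y = snd B x' y"
    have aM: "a \<subseteq> carrier M" using assms(4) a by blast
    have "\<forall>y\<in>a. snd A (g x) y = snd A (g x') y"
      proof
      fix y assume y: "y \<in> a"
      have yM: "y \<in> carrier M" using y aM by blast
      have "snd A (g x) y = g (snd B x y)" using mhomD(2)[OF g x yM] by simp
      also have "\<dots> = g (snd B x' y)" using eq y by simp
      also have "\<dots> = snd A (g x') y" using mhomD(2)[OF g x' yM] by simp
      finally show "snd A (g x) y = snd A (g x') y" .
    qed
    hence "g x = g x'" using shA a mhomD(1)[OF g] x x' by blast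
    thus "x = x'" using fg x x' by metis
  next
    fix a \<phi> assume a: "a \<in> F" and ph: "mhom M (a, mult M) B \<phi>"
    have aM: "a \<subseteq> carrier M" using assms(4) a by blast
    have "mhom M (a, mult M) A (\<lambda>y. g (\<phi> y))" using mhom_comp[OF ph g] .
    then obtain x0 where x0: "x0 \<in> fst A" and hx: "\<forall>y\<in>a. g (\<phi> y) = snd A x0 y"
      using shA a by blast
    have "\<forall>y\<in>a. \<phi> y = snd B (f x0) y"
    proof
      fix y assume y: "y \<in> a"
      have "\<phi> y \<in> fst B" using mhomD(1)[OF ph] y by simp
      hence "\<phi> y = f (g (\<phi> y))" using fg by simp
      also have "\<dots> = f (snd A x0 y)" using hx y by simp
      also have "\<dots> = snd B (f x0) y" using mhomD(2)[OF f x0] y aM by blast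
      finally show "\<phi> y = snd B (f x0) y" .
    qed
    thus "\<exists>x\<in>fst B. \<forall>y\<in>a. \<phi> y = snd B x y" using mhomD(1)[OF f x0] by blast
  qed
qed


definition msep :: "('m,'b) monoid_scheme \<Rightarrow> 'm set \<Rightarrow> ('x,'m) mobj \<Rightarrow> bool" where
  "msep M I A \<longleftrightarrow> (\<forall>x\<in>fst A. \<forall>x'\<in>fst A. (\<forall>y\<in>I. snd A x y = snd A x' y) \<longrightarrow> x = x')"

definition mext :: "('m,'b) monoid_scheme \<Rightarrow> 'm set \<Rightarrow> ('x,'m) mobj \<Rightarrow> bool" where
  "mext M I A \<longleftrightarrow> (\<forall>\<phi>. mhom M (I, mult M) A \<phi> \<longrightarrow> (\<exists>x\<in>fst A. \<forall>y\<in>I. \<phi> y = snd A x y))"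

locale idm = monoid M for M :: "('m,'b) monoid_scheme" (structure) +
  fixes I :: "'m set"
  assumes I_ideal: "two_sided_ideal M I"
    and I_idem: "I = {x \<otimes>\<^bsub>M\<^esub> y | x y. x \<in> I \<and> y \<in> I}"
begin

lemma I_sub: "I \<subseteq> carrier M" using I_ideal unfolding two_sided_ideal_def right_ideal_def by blast
lemma I_right: "x \<in> I \<Longrightarrow> s \<in> carrier M \<Longrightarrow> x \<otimes> s \<in> I"
  using I_ideal unfolding two_sided_ideal_def right_ideal_def by blast
lemma I_left: "x \<in> I \<Longrightarrow> s \<in> carrier M \<Longrightarrow> s \<otimes> x \<in> I"
  using I_ideal unfolding two_sided_ideal_def by blast
lemma I_carr: "x \<in> I \<Longrightarrow> x \<in> carrier M" using I_sub by blast
lemma I_split: "z \<in> I \<Longrightarrow> \<exists>x y. x \<in> I \<and> y \<in> I \<and> z = x \<otimes> y"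
  using I_idem by blast

definition Pobj :: "('x,'m) mobj \<Rightarrow> ('m \<Rightarrow> 'x,'m) mobj" where
  "Pobj A = ({\<phi> \<in> extensional I. (\<forall>y\<in>I. \<phi> y \<in> fst A) \<and>
        (\<forall>y\<in>I. \<forall>s\<in>carrier M. \<phi> (y \<otimes> s) = snd A (\<phi> y) s)},
      \<lambda>\<phi> s. restrict (\<lambda>y. \<phi> (s \<otimes> y)) I)"

definition etaP :: "('x,'m) mobj \<Rightarrow> 'x \<Rightarrow> ('m \<Rightarrow> 'x)" where
  "etaP A x = restrict (\<lambda>y. snd A x y) I"

definition Pmap :: "('x \<Rightarrow> 'y) \<Rightarrow> ('m \<Rightarrow> 'x) \<Rightarrow> ('m \<Rightarrow> 'y)" where
  "Pmap h \<phi> = restrict (\<lambda>y. h (\<phi> y)) I"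

lemma Pobj_mem: "\<phi> \<in> fst (Pobj A) \<longleftrightarrow> \<phi> \<in> extensional I \<and> (\<forall>y\<in>I. \<phi> y \<in> fst A) \<and>
        (\<forall>y\<in>I. \<forall>s\<in>carrier M. \<phi> (y \<otimes> s) = snd A (\<phi> y) s)"
  by (simp add: Pobj_def)

lemma Pobj_act: "snd (Pobj A) \<phi> s = restrict (\<lambda>y. \<phi> (s \<otimes> y)) I"
  by (simp add: Pobj_def)

lemma Pobj_mem_hom: "\<phi> \<in> fst (Pobj A) \<longleftrightarrow> \<phi> \<in> extensional I \<and> mhom M (I, mult M) A \<phi>"
  unfolding Pobj_mem mhom_def by auto

lemma ext_eqI: "f \<in> extensional I \<Longrightarrow> g \<in> extensional I \<Longrightarrow> (\<And>y. y \<in> I \<Longrightarrow> f y = g y) \<Longrightarrow> f = g"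
  by (rule extensionalityI)

lemma P_rmset:
  assumes A: "rmset M A"
  shows "rmset M (Pobj A)"
  unfolding rmset_def
proof (intro conjI ballI)
  fix \<phi> s assume ph: "\<phi> \<in> fst (Pobj A)" and s: "s \<in> carrier M"
  have ph': "\<phi> \<in> extensional I" "\<And>y. y \<in> I \<Longrightarrow> \<phi> y \<in> fst A"
     "\<And>y t. y \<in> I \<Longrightarrow> t \<in> carrier M \<Longrightarrow> \<phi> (y \<otimes> t) = snd A (\<phi> y) t"
    using ph unfolding Pobj_mem by auto
  show "snd (Pobj A) \<phi> s \<in> fst (Pobj A)"
    unfolding Pobj_mem Pobj_act
  proof (intro conjI ballI)
    show "restrict (\<lambda>y. \<phi> (s \<otimes> y)) I \<in> extensional I" by simp
  next
    fix y assume y: "y \<in> I"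
    show "restrict (\<lambda>y. \<phi> (s \<otimes> y)) I y \<in> fst A" using y ph'(2)[OF I_left[OF y s]] by simp
  next
    fix y t assume y: "y \<in> I" and t: "t \<in> carrier M"
    have "s \<otimes> (y \<otimes> t) = (s \<otimes> y) \<otimes> t" using s t I_carr[OF y] by (simp add: m_assoc)
    thus "restrict (\<lambda>y. \<phi> (s \<otimes> y)) I (y \<otimes> t) = snd A (restrict (\<lambda>y. \<phi> (s \<otimes> y)) I y) t"
      using y t I_right[OF y t] ph'(3)[OF I_left[OF y s] t] by simp
  qed
next
  fix \<phi> assume ph: "\<phi> \<in> fst (Pobj A)"
  hence "\<phi> \<in> extensional I" unfolding Pobj_mem by auto
  thus "snd (Pobj A) \<phi> \<one> = \<phi>" unfolding Pobj_act
    by (intro ext_eqI) (auto simp: I_carr)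
next
  fix \<phi> s t assume ph: "\<phi> \<in> fst (Pobj A)" and s: "s \<in> carrier M" and t: "t \<in> carrier M"
  show "snd (Pobj A) \<phi> (s \<otimes> t) = snd (Pobj A) (snd (Pobj A) \<phi> s) t"
    unfolding Pobj_act
    by (intro ext_eqI) (auto simp: I_carr m_assoc s t I_left)
qed

lemma etaP_mem:
  assumes A: "rmset M A" and x: "x \<in> fst A"
  shows "etaP A x \<in> fst (Pobj A)"
  unfolding Pobj_mem etaP_def
  using rmsetD[OF A] x by (auto simp: I_carr I_right)

lemma etaP_hom:
  assumes A: "rmset M A"
  shows "mhom M A (Pobj A) (etaP A)"
  unfolding mhom_def
proof (intro conjI ballI)
  fix x assume "x \<in> fst A" thus "etaP A x \<in> fst (Pobj A)" using etaP_mem[OF A] by simp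
next
  fix x s assume x: "x \<in> fst A" and s: "s \<in> carrier M"
  show "etaP A (snd A x s) = snd (Pobj A) (etaP A x) s"
    unfolding etaP_def Pobj_act
    by (intro ext_eqI) (auto simp: rmsetD(3)[OF A x s] I_carr I_left x s)
qed

lemma Pobj_act_eta:
  assumes A: "rmset M A" and ph: "\<phi> \<in> fst (Pobj A)" and s: "s \<in> I"
  shows "snd (Pobj A) \<phi> s = etaP A (\<phi> s)"
proof -
  have ph': "\<phi> \<in> extensional I" "\<And>y t. y \<in> I \<Longrightarrow> t \<in> carrier M \<Longrightarrow> \<phi> (y \<otimes> t) = snd A (\<phi> y) t"
    using ph unfolding Pobj_mem by auto
  show ?thesis unfolding Pobj_act etaP_def
    by (intro ext_eqI) (auto simp: ph'(2) s I_carr)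
qed

lemma P_sep:
  assumes A: "rmset M A"
  shows "msep M I (Pobj A)"
  unfolding msep_def
proof (intro ballI impI)
  fix \<phi> \<psi> assume ph: "\<phi> \<in> fst (Pobj A)" and ps: "\<psi> \<in> fst (Pobj A)"
    and eq: "\<forall>y\<in>I. snd (Pobj A) \<phi> y = snd (Pobj A) \<psi> y"
  have e1: "\<phi> \<in> extensional I" "\<psi> \<in> extensional I" using ph ps unfolding Pobj_mem by auto
  show "\<phi> = \<psi>"
  proof (rule ext_eqI[OF e1])
    fix z assume z: "z \<in> I"
    then obtain x y where xy: "x \<in> I" "y \<in> I" "z = x \<otimes> y" using I_split by blast
    have "snd (Pobj A) \<phi> x y = snd (Pobj A) \<psi> x y" using eq xy by simp
    thus "\<phi> z = \<psi> z" unfolding Pobj_act using xy by simp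
  qed
qed

end

context idm begin

lemma P_ext:
  assumes A: "rmset M A" and sepA: "msep M I A"
  shows "mext M I (Pobj A)"
  unfolding mext_def
proof (intro allI impI)
  fix \<Phi> assume Ph: "mhom M (I, mult M) (Pobj A) \<Phi>"
  have Phm: "\<And>s. s \<in> I \<Longrightarrow> \<Phi> s \<in> fst (Pobj A)" using mhomD(1)[OF Ph] by simp
  have Phe: "\<And>s y. s \<in> I \<Longrightarrow> y \<in> carrier M \<Longrightarrow> \<Phi> (s \<otimes> y) = snd (Pobj A) (\<Phi> s) y"
    using mhomD(2)[OF Ph] by simp
  have Ph1: "\<And>s y. s \<in> I \<Longrightarrow> y \<in> I \<Longrightarrow> \<Phi> s y \<in> fst A"
    using Phm unfolding Pobj_mem by blast
  have Ph2: "\<And>s y t. s \<in> I \<Longrightarrow> y \<in> I \<Longrightarrow> t \<in> carrier M \<Longrightarrow> \<Phi> s (y \<otimes> t) = snd A (\<Phi> s y) t"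
    using Phm unfolding Pobj_mem by blast
  have key0: "\<And>s y t. s \<in> I \<Longrightarrow> y \<in> I \<Longrightarrow> t \<in> I \<Longrightarrow> snd A (\<Phi> s y) t = \<Phi> (s \<otimes> y) t"
  proof -
    fix s y t assume s: "s \<in> I" and y: "y \<in> I" and t: "t \<in> I"
    have "\<Phi> (s \<otimes> y) t = snd (Pobj A) (\<Phi> s) y t" using Phe[OF s I_carr[OF y]] by simp
    also have "\<dots> = \<Phi> s (y \<otimes> t)" unfolding Pobj_act using t by simp
    also have "\<dots> = snd A (\<Phi> s y) t" using Ph2[OF s y I_carr[OF t]] .
    finally show "snd A (\<Phi> s y) t = \<Phi> (s \<otimes> y) t" by simp
  qed
  have key: "\<And>s y s' y'. s \<in> I \<Longrightarrow> y \<in> I \<Longrightarrow> s' \<in> I \<Longrightarrow> y' \<in> I \<Longrightarrow> s \<otimes> y = s' \<otimes> y'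
      \<Longrightarrow> \<Phi> s y = \<Phi> s' y'"
  proof -
    fix s y s' y' assume s: "s \<in> I" and y: "y \<in> I" and s': "s' \<in> I" and y': "y' \<in> I"
      and e: "s \<otimes> y = s' \<otimes> y'"
    have "\<forall>t\<in>I. snd A (\<Phi> s y) t = snd A (\<Phi> s' y') t" using key0 s y s' y' e by simp
    moreover have "\<forall>x\<in>fst A. \<forall>x'\<in>fst A. (\<forall>y\<in>I. snd A x y = snd A x' y) \<longrightarrow> x = x'"
      using sepA unfolding msep_def .
    ultimately show "\<Phi> s y = \<Phi> s' y'" using Ph1[OF s y] Ph1[OF s' y'] by blast
  qed
  define sp where "sp z = (SOME p. fst p \<in> I \<and> snd p \<in> I \<and> z = fst p \<otimes> snd p)" for z
  have sp: "\<And>z. z \<in> I \<Longrightarrow> fst (sp z) \<in> I \<and> snd (sp z) \<in> I \<and> z = fst (sp z) \<otimes> snd (sp z)"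
  proof -
    fix z assume z: "z \<in> I"
    then obtain x y where "x \<in> I" "y \<in> I" "z = x \<otimes> y" using I_split by blast
    hence "\<exists>p. fst p \<in> I \<and> snd p \<in> I \<and> z = fst p \<otimes> snd p" by (intro exI[of _ "(x,y)"]) simp
    thus "fst (sp z) \<in> I \<and> snd (sp z) \<in> I \<and> z = fst (sp z) \<otimes> snd (sp z)"
      unfolding sp_def by (rule someI_ex)
  qed
  define \<psi> where "\<psi> = restrict (\<lambda>z. \<Phi> (fst (sp z)) (snd (sp z))) I"
  have psi: "\<And>s y. s \<in> I \<Longrightarrow> y \<in> I \<Longrightarrow> \<psi> (s \<otimes> y) = \<Phi> s y"
  proof -
    fix s y assume s: "s \<in> I" and y: "y \<in> I"
    have z: "s \<otimes> y \<in> I" using I_right[OF s I_carr[OF y]] .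
    have "\<psi> (s \<otimes> y) = \<Phi> (fst (sp (s \<otimes> y))) (snd (sp (s \<otimes> y)))" by (simp add: \<psi>_def z)
    also have "\<dots> = \<Phi> s y" using sp[OF z] key s y by metis
    finally show "\<psi> (s \<otimes> y) = \<Phi> s y" .
  qed
  have psiI: "\<psi> \<in> fst (Pobj A)" unfolding Pobj_mem
  proof (intro conjI ballI)
    show "\<psi> \<in> extensional I" unfolding \<psi>_def by simp
  next
    fix z assume z: "z \<in> I"
    obtain s y where sy: "s \<in> I" "y \<in> I" "z = s \<otimes> y" using sp[OF z] by blast
    show "\<psi> z \<in> fst A" using psi[OF sy(1,2)] Ph1[OF sy(1,2)] sy(3) by simp
  next
    fix z t assume z: "z \<in> I" and t: "t \<in> carrier M"
    obtain s y where sy: "s \<in> I" "y \<in> I" "z = s \<otimes> y" using sp[OF z] by blast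
    have yt: "y \<otimes> t \<in> I" using I_right[OF sy(2) t] .
    have "z \<otimes> t = s \<otimes> (y \<otimes> t)" using sy t by (simp add: m_assoc I_carr)
    hence "\<psi> (z \<otimes> t) = \<Phi> s (y \<otimes> t)" using psi[OF sy(1) yt] by simp
    also have "\<dots> = snd A (\<Phi> s y) t" using Ph2[OF sy(1,2) t] .
    also have "\<dots> = snd A (\<psi> z) t" using psi[OF sy(1,2)] sy(3) by simp
    finally show "\<psi> (z \<otimes> t) = snd A (\<psi> z) t" .
  qed
  have "\<forall>s\<in>I. \<Phi> s = snd (Pobj A) \<psi> s"
  proof
    fix s assume s: "s \<in> I"
    have e: "\<Phi> s \<in> extensional I" using Phm[OF s] unfolding Pobj_mem by blast
    show "\<Phi> s = snd (Pobj A) \<psi> s" unfolding Pobj_act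
      by (rule ext_eqI[OF e]) (auto simp: psi s)
  qed
  thus "\<exists>x\<in>fst (Pobj A). \<forall>y\<in>I. \<Phi> y = snd (Pobj A) x y" using psiI by blast
qed


lemma ext_unique:
  assumes A: "rmset M A" and sepY: "msep M I Y"
    and g: "mhom M (Pobj A) Y g" and g': "mhom M (Pobj A) Y g'"
    and eq: "\<And>x. x \<in> fst A \<Longrightarrow> g (etaP A x) = g' (etaP A x)"
    and ph: "\<phi> \<in> fst (Pobj A)"
  shows "g \<phi> = g' \<phi>"
proof -
  have "\<forall>s\<in>I. snd Y (g \<phi>) s = snd Y (g' \<phi>) s"
  proof
    fix s assume s: "s \<in> I"
    have ps: "\<phi> s \<in> fst A" using ph s unfolding Pobj_mem by blast
    have "snd Y (g \<phi>) s = g (snd (Pobj A) \<phi> s)" using mhomD(2)[OF g ph I_carr[OF s]] by simp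
    also have "\<dots> = g (etaP A (\<phi> s))" using Pobj_act_eta[OF A ph s] by simp
    also have "\<dots> = g' (etaP A (\<phi> s))" using eq[OF ps] .
    also have "\<dots> = g' (snd (Pobj A) \<phi> s)" using Pobj_act_eta[OF A ph s] by simp
    also have "\<dots> = snd Y (g' \<phi>) s" using mhomD(2)[OF g' ph I_carr[OF s]] by simp
    finally show "snd Y (g \<phi>) s = snd Y (g' \<phi>) s" .
  qed
  thus ?thesis using sepY mhomD(1)[OF g ph] mhomD(1)[OF g' ph] unfolding msep_def by blast
qed

lemma ext_exists:
  assumes A: "rmset M A" and Y: "rmset M Y" and sepY: "msep M I Y" and extY: "mext M I Y"
    and f: "mhom M A Y f"
  shows "\<exists>g. mhom M (Pobj A) Y g \<and> (\<forall>x\<in>fst A. g (etaP A x) = f x)"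
proof -
  have ex: "\<And>\<phi>. \<phi> \<in> fst (Pobj A) \<Longrightarrow> \<exists>y\<in>fst Y. \<forall>s\<in>I. f (\<phi> s) = snd Y y s"
  proof -
    fix \<phi> assume ph: "\<phi> \<in> fst (Pobj A)"
    have "mhom M (I, mult M) A \<phi>" using ph unfolding Pobj_mem_hom by blast
    hence "mhom M (I, mult M) Y (\<lambda>s. f (\<phi> s))" using mhom_comp f by blast
    thus "\<exists>y\<in>fst Y. \<forall>s\<in>I. f (\<phi> s) = snd Y y s" using extY unfolding mext_def by blast
  qed
  have un: "\<And>\<phi> y y'. y \<in> fst Y \<Longrightarrow> y' \<in> fst Y \<Longrightarrow> \<forall>s\<in>I. f (\<phi> s) = snd Y y s \<Longrightarrow>
     \<forall>s\<in>I. f (\<phi> s) = snd Y y' s \<Longrightarrow> y = y'"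
  proof -
    fix \<phi> y y' assume y: "y \<in> fst Y" and y': "y' \<in> fst Y" and h1: "\<forall>s\<in>I. f (\<phi> s) = snd Y y s"
      and h2: "\<forall>s\<in>I. f (\<phi> s) = snd Y y' s"
    have "\<forall>s\<in>I. snd Y y s = snd Y y' s" using h1 h2 by simp
    thus "y = y'" using sepY y y' unfolding msep_def by blast
  qed
  define g where "g \<phi> = (SOME y. y \<in> fst Y \<and> (\<forall>s\<in>I. f (\<phi> s) = snd Y y s))" for \<phi>
  have gp: "\<And>\<phi>. \<phi> \<in> fst (Pobj A) \<Longrightarrow> g \<phi> \<in> fst Y \<and> (\<forall>s\<in>I. f (\<phi> s) = snd Y (g \<phi>) s)"
  proof -
    fix \<phi> assume "\<phi> \<in> fst (Pobj A)"
    hence "\<exists>y. y \<in> fst Y \<and> (\<forall>s\<in>I. f (\<phi> s) = snd Y y s)" using ex by blast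
    thus "g \<phi> \<in> fst Y \<and> (\<forall>s\<in>I. f (\<phi> s) = snd Y (g \<phi>) s)" unfolding g_def by (rule someI_ex)
  qed
  have gu: "\<And>\<phi> y. \<phi> \<in> fst (Pobj A) \<Longrightarrow> y \<in> fst Y \<Longrightarrow> \<forall>s\<in>I. f (\<phi> s) = snd Y y s \<Longrightarrow> g \<phi> = y"
  proof -
    fix \<phi> y assume ph: "\<phi> \<in> fst (Pobj A)" and y: "y \<in> fst Y" and h: "\<forall>s\<in>I. f (\<phi> s) = snd Y y s"
    show "g \<phi> = y" using un[of "g \<phi>" y \<phi>] gp[OF ph] y h by blast
  qed
  have "mhom M (Pobj A) Y g"
    unfolding mhom_def
  proof (intro conjI ballI)
    fix \<phi> assume "\<phi> \<in> fst (Pobj A)" thus "g \<phi> \<in> fst Y" using gp by blast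
  next
    fix \<phi> r assume ph: "\<phi> \<in> fst (Pobj A)" and r: "r \<in> carrier M"
    have pr: "snd (Pobj A) \<phi> r \<in> fst (Pobj A)" using rmsetD(1)[OF P_rmset[OF A] ph r] .
    show "g (snd (Pobj A) \<phi> r) = snd Y (g \<phi>) r"
    proof (rule gu[OF pr])
      show "snd Y (g \<phi>) r \<in> fst Y" using rmsetD(1)[OF Y] gp[OF ph] r by blast
      show "\<forall>s\<in>I. f (snd (Pobj A) \<phi> r s) = snd Y (snd Y (g \<phi>) r) s"
      proof
        fix s assume s: "s \<in> I"
        have "f (snd (Pobj A) \<phi> r s) = f (\<phi> (r \<otimes> s))" unfolding Pobj_act using s by simp
        also have "\<dots> = snd Y (g \<phi>) (r \<otimes> s)" using gp[OF ph] I_left[OF s r] by blast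
        also have "\<dots> = snd Y (snd Y (g \<phi>) r) s" using rmsetD(3)[OF Y] gp[OF ph] r I_carr[OF s] by blast
        finally show "f (snd (Pobj A) \<phi> r s) = snd Y (snd Y (g \<phi>) r) s" .
      qed
    qed
  qed
  moreover have "\<forall>x\<in>fst A. g (etaP A x) = f x"
  proof
    fix x assume x: "x \<in> fst A"
    show "g (etaP A x) = f x"
    proof (rule gu[OF etaP_mem[OF A x]])
      show "f x \<in> fst Y" using mhomD(1)[OF f x] .
      show "\<forall>s\<in>I. f (etaP A x s) = snd Y (f x) s"
        unfolding etaP_def using mhomD(2)[OF f x] I_carr by simp
    qed
  qed
  ultimately show ?thesis by blast
qed


lemma Pmap_mem:
  assumes h: "mhom M A B h" and ph: "\<phi> \<in> fst (Pobj A)"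
  shows "Pmap h \<phi> \<in> fst (Pobj B)"
  using ph mhomD[OF h] unfolding Pobj_mem Pmap_def by (auto simp: I_right)

lemma Pmap_hom:
  assumes h: "mhom M A B h"
  shows "mhom M (Pobj A) (Pobj B) (Pmap h)"
  unfolding mhom_def
proof (intro conjI ballI)
  fix \<phi> assume "\<phi> \<in> fst (Pobj A)" thus "Pmap h \<phi> \<in> fst (Pobj B)" using Pmap_mem[OF h] by blast
next
  fix \<phi> s assume ph: "\<phi> \<in> fst (Pobj A)" and s: "s \<in> carrier M"
  show "Pmap h (snd (Pobj A) \<phi> s) = snd (Pobj B) (Pmap h \<phi>) s"
    unfolding Pmap_def Pobj_act by (intro ext_eqI) (auto simp: I_left s)
qed

lemma Pmap_nat:
  assumes h: "mhom M A B h" and x: "x \<in> fst A"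
  shows "Pmap h (etaP A x) = etaP B (h x)"
  unfolding Pmap_def etaP_def by (intro ext_eqI) (auto simp: mhomD(2)[OF h x] I_carr)

lemma Pmap_cong:
  assumes "\<And>x. x \<in> fst A \<Longrightarrow> h x = h' x" and ph: "\<phi> \<in> fst (Pobj A)"
  shows "Pmap h \<phi> = Pmap h' \<phi>"
  using assms unfolding Pmap_def Pobj_mem by (intro ext_eqI) auto

lemma Pmap_comp:
  "Pmap g (Pmap h \<phi>) = Pmap (\<lambda>x. g (h x)) \<phi>"
  unfolding Pmap_def by (intro ext_eqI) auto

lemma P_terminal:
  assumes "fst T = {t}" "rmset M T"
  shows "fst (Pobj T) = {restrict (\<lambda>_. t) I}"
proof -
  have tt: "\<And>s. s \<in> carrier M \<Longrightarrow> snd T t s = t" using rmsetD(1)[OF assms(2)] assms(1) by blast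
  show ?thesis
  proof (intro equalityI subsetI)
    fix \<phi> assume "\<phi> \<in> fst (Pobj T)"
    hence e: "\<phi> \<in> extensional I" and v: "\<forall>y\<in>I. \<phi> y \<in> fst T" by (simp_all add: Pobj_mem)
    have "\<phi> = restrict (\<lambda>_. t) I" by (rule ext_eqI[OF e]) (use v assms(1) in auto)
    thus "\<phi> \<in> {restrict (\<lambda>_. t) I}" by simp
  next
    fix \<phi> assume "\<phi> \<in> {restrict (\<lambda>_. t) I}"
    hence ph: "\<phi> = restrict (\<lambda>_. t) I" by simp
    show "\<phi> \<in> fst (Pobj T)" unfolding Pobj_mem ph using assms(1) tt I_right by auto
  qed
qed

end

definition pbsq :: "('m,'b) monoid_scheme \<Rightarrow> ('x,'m) mobj \<Rightarrow> ('x \<Rightarrow> 'x) \<Rightarrow> ('x \<Rightarrow> 'x)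
    \<Rightarrow> ('x,'m) mobj \<Rightarrow> ('x,'m) mobj \<Rightarrow> ('x,'m) mobj \<Rightarrow> ('x \<Rightarrow> 'x) \<Rightarrow> ('x \<Rightarrow> 'x) \<Rightarrow> bool" where
  "pbsq M P p1 p2 A B C f g \<longleftrightarrow>
     rmset M P \<and> rmset M A \<and> rmset M B \<and> rmset M C \<and>
     mhom M P A p1 \<and> mhom M P B p2 \<and> mhom M A C f \<and> mhom M B C g \<and>
     (\<forall>x\<in>fst P. f (p1 x) = g (p2 x)) \<and>
     (\<forall>x\<in>fst P. \<forall>x'\<in>fst P. p1 x = p1 x' \<and> p2 x = p2 x' \<longrightarrow> x = x') \<and>
     (\<forall>a\<in>fst A. \<forall>b\<in>fst B. f a = g b \<longrightarrow> (\<exists>x\<in>fst P. p1 x = a \<and> p2 x = b))"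

definition Mu :: "('m,'b) monoid_scheme \<Rightarrow> ('m \<Rightarrow> 'x) \<Rightarrow> ('x,'m) mobj" where
  "Mu M e = tr e (carrier M, mult M)"

definition elt :: "('m,'b) monoid_scheme \<Rightarrow> ('m \<Rightarrow> 'x) \<Rightarrow> ('y,'m) mobj \<Rightarrow> 'y \<Rightarrow> 'x \<Rightarrow> 'y" where
  "elt M e B b u = snd B b (inv_into (carrier M) e u)"

lemma carrier_rmset: "monoid M \<Longrightarrow> rmset M (carrier M, mult M)"
  unfolding rmset_def by (simp add: monoid.m_closed monoid.r_one monoid.m_assoc)

lemma Mu_rmset: "monoid M \<Longrightarrow> inj_on e (carrier M) \<Longrightarrow> rmset M (Mu M e)"
  unfolding Mu_def by (rule tr_rmset) (simp_all add: carrier_rmset)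

lemma Mu_fst: "fst (Mu M e) = e ` carrier M" by (simp add: Mu_def)

lemma Mu_act: "inj_on e (carrier M) \<Longrightarrow> s \<in> carrier M \<Longrightarrow> snd (Mu M e) (e s) t = e (s \<otimes>\<^bsub>M\<^esub> t)"
  unfolding Mu_def by (simp add: tr_act)

lemma elt_e: "inj_on e (carrier M) \<Longrightarrow> s \<in> carrier M \<Longrightarrow> elt M e B b (e s) = snd B b s"
  unfolding elt_def by simp

lemma elt_hom:
  assumes M: "monoid M" and e: "inj_on e (carrier M)" and B: "rmset M B" and b: "b \<in> fst B"
  shows "mhom M (Mu M e) B (elt M e B b)" "elt M e B b (e \<one>\<^bsub>M\<^esub>) = b"
proof -
  show "elt M e B b (e \<one>\<^bsub>M\<^esub>) = b" unfolding elt_def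
    using rmsetD(2)[OF B b] monoid.one_closed[OF M] e by (simp add: inv_into_f_f)
  show "mhom M (Mu M e) B (elt M e B b)"
    unfolding mhom_def Mu_fst
  proof (intro conjI ballI)
    fix u assume "u \<in> e ` carrier M"
    then obtain s where s: "s \<in> carrier M" "u = e s" by blast
    have "elt M e B b u = snd B b s" unfolding elt_def s(2) using e s(1) by (simp add: inv_into_f_f)
    thus "elt M e B b u \<in> fst B" using s rmsetD(1)[OF B b] by simp
  next
    fix u t assume "u \<in> e ` carrier M" and t: "t \<in> carrier M"
    then obtain s where s: "s \<in> carrier M" "u = e s" by blast
    have st: "s \<otimes>\<^bsub>M\<^esub> t \<in> carrier M" using monoid.m_closed[OF M s(1) t] .
    show "elt M e B b (snd (Mu M e) u t) = snd B (elt M e B b u) t"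
    proof -
      have "elt M e B b u = snd B b s" unfolding elt_def s(2) using e s(1) by (simp add: inv_into_f_f)
      moreover have "elt M e B b (snd (Mu M e) u t) = snd B b (s \<otimes>\<^bsub>M\<^esub> t)"
        unfolding elt_def s(2) Mu_act[OF e s(1)] using e st by (simp add: inv_into_f_f)
      ultimately show ?thesis using rmsetD(3)[OF B b s(1) t] by simp
    qed
  qed
qed

lemma hom_from_Mu:
  assumes M: "monoid M" and e: "inj_on e (carrier M)" and h: "mhom M (Mu M e) B h"
    and s: "s \<in> carrier M"
  shows "h (e s) = snd B (h (e \<one>\<^bsub>M\<^esub>)) s"
proof -
  have one: "\<one>\<^bsub>M\<^esub> \<in> carrier M" using monoid.one_closed[OF M] .
  have "e s = snd (Mu M e) (e \<one>\<^bsub>M\<^esub>) s" using Mu_act[OF e one] monoid.l_one[OF M s] by simp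
  moreover have "e \<one>\<^bsub>M\<^esub> \<in> fst (Mu M e)" using one by (simp add: Mu_fst)
  ultimately show ?thesis using mhomD(2)[OF h] s by simp
qed

lemma Mu_homs_eq:
  assumes M: "monoid M" and e: "inj_on e (carrier M)" and h: "mhom M (Mu M e) B h"
    and h': "mhom M (Mu M e) B h'" and eq: "h (e \<one>\<^bsub>M\<^esub>) = h' (e \<one>\<^bsub>M\<^esub>)"
    and u: "u \<in> fst (Mu M e)"
  shows "h u = h' u"
proof -
  obtain s where s: "s \<in> carrier M" "u = e s" using u by (auto simp: Mu_fst)
  show ?thesis using hom_from_Mu[OF M e h s(1)] hom_from_Mu[OF M e h' s(1)] eq s(2) by simp
qed

lemma pullback_iff:
  fixes M :: "('m,'b) monoid_scheme" and P A B C :: "('x,'m) mobj" and e :: "'m \<Rightarrow> 'x"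
  assumes M: "monoid M" and e: "inj_on e (carrier M)"
  shows "is_pullback M P p1 p2 A B C f g \<longleftrightarrow> pbsq M P p1 p2 A B C f g"
proof
  assume pb: "is_pullback M P p1 p2 A B C f g"
  have basic: "rmset M P \<and> rmset M A \<and> rmset M B \<and> rmset M C \<and>
     mhom M P A p1 \<and> mhom M P B p2 \<and> mhom M A C f \<and> mhom M B C g \<and>
     (\<forall>x\<in>fst P. f (p1 x) = g (p2 x))" using pb unfolding is_pullback_def by blast
  hence P: "rmset M P" and A: "rmset M A" and B: "rmset M B" and p1: "mhom M P A p1"
    and p2: "mhom M P B p2" and f: "mhom M A C f" and g: "mhom M B C g" by blast+
  have univ: "\<And>(Q::('x,'m) mobj) q1 q2. rmset M Q \<Longrightarrow> mhom M Q A q1 \<Longrightarrow> mhom M Q B q2 \<Longrightarrow>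
          (\<forall>x\<in>fst Q. f (q1 x) = g (q2 x)) \<Longrightarrow>
        (\<exists>u. mhom M Q P u \<and> (\<forall>x\<in>fst Q. p1 (u x) = q1 x \<and> p2 (u x) = q2 x) \<and>
           (\<forall>u'. mhom M Q P u' \<and> (\<forall>x\<in>fst Q. p1 (u' x) = q1 x \<and> p2 (u' x) = q2 x)
                 \<longrightarrow> (\<forall>x\<in>fst Q. u' x = u x)))"
    using pb unfolding is_pullback_def by blast
  have Q: "rmset M (Mu M e)" using Mu_rmset[OF M e] .
  have one: "e \<one>\<^bsub>M\<^esub> \<in> fst (Mu M e)" using monoid.one_closed[OF M] by (simp add: Mu_fst)
  have inj: "\<forall>x\<in>fst P. \<forall>x'\<in>fst P. p1 x = p1 x' \<and> p2 x = p2 x' \<longrightarrow> x = x'"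
  proof (intro ballI impI)
    fix x x' assume x: "x \<in> fst P" and x': "x' \<in> fst P" and eq: "p1 x = p1 x' \<and> p2 x = p2 x'"
    let ?u = "elt M e P x" and ?u' = "elt M e P x'"
    have u: "mhom M (Mu M e) P ?u" and u1: "?u (e \<one>\<^bsub>M\<^esub>) = x" using elt_hom[OF M e P x] by blast+
    have u': "mhom M (Mu M e) P ?u'" and u1': "?u' (e \<one>\<^bsub>M\<^esub>) = x'" using elt_hom[OF M e P x'] by blast+
    have q1: "mhom M (Mu M e) A (\<lambda>y. p1 (?u y))" using mhom_comp[OF u p1] .
    have q2: "mhom M (Mu M e) B (\<lambda>y. p2 (?u y))" using mhom_comp[OF u p2] .
    have c: "\<forall>y\<in>fst (Mu M e). f (p1 (?u y)) = g (p2 (?u y))"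
      using basic mhomD(1)[OF u] by blast
    obtain w where w: "mhom M (Mu M e) P w"
      and wu: "\<forall>u'. mhom M (Mu M e) P u' \<and> (\<forall>y\<in>fst (Mu M e). p1 (u' y) = p1 (?u y) \<and> p2 (u' y) = p2 (?u y))
                 \<longrightarrow> (\<forall>y\<in>fst (Mu M e). u' y = w y)"
      using univ[OF Q q1 q2 c] by blast
    have a1: "\<forall>y\<in>fst (Mu M e). ?u y = w y" using wu u by blast
    have "\<forall>y\<in>fst (Mu M e). p1 (?u' y) = p1 (?u y) \<and> p2 (?u' y) = p2 (?u y)"
    proof
      fix y assume y: "y \<in> fst (Mu M e)"
      have i1: "mhom M (Mu M e) A (\<lambda>y. p1 (?u y))" "mhom M (Mu M e) A (\<lambda>y. p1 (?u' y))"
        using mhom_comp[OF u p1] mhom_comp[OF u' p1] .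
      have i2: "mhom M (Mu M e) B (\<lambda>y. p2 (?u y))" "mhom M (Mu M e) B (\<lambda>y. p2 (?u' y))"
        using mhom_comp[OF u p2] mhom_comp[OF u' p2] .
      show "p1 (?u' y) = p1 (?u y) \<and> p2 (?u' y) = p2 (?u y)"
        using Mu_homs_eq[OF M e i1(2) i1(1) _ y] Mu_homs_eq[OF M e i2(2) i2(1) _ y] u1 u1' eq by simp
    qed
    hence a2: "\<forall>y\<in>fst (Mu M e). ?u' y = w y" using wu u' by blast
    show "x = x'" using a1 a2 one u1 u1' by metis
  qed
  have surj: "\<forall>a\<in>fst A. \<forall>b\<in>fst B. f a = g b \<longrightarrow> (\<exists>x\<in>fst P. p1 x = a \<and> p2 x = b)"
  proof (intro ballI impI)
    fix a b assume a: "a \<in> fst A" and b: "b \<in> fst B" and ab: "f a = g b"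
    have q1: "mhom M (Mu M e) A (elt M e A a)" and q1e: "elt M e A a (e \<one>\<^bsub>M\<^esub>) = a"
      using elt_hom[OF M e A a] by blast+
    have q2: "mhom M (Mu M e) B (elt M e B b)" and q2e: "elt M e B b (e \<one>\<^bsub>M\<^esub>) = b"
      using elt_hom[OF M e B b] by blast+
    have fq: "mhom M (Mu M e) C (\<lambda>y. f (elt M e A a y))" using mhom_comp[OF q1 f] .
    have gq: "mhom M (Mu M e) C (\<lambda>y. g (elt M e B b y))" using mhom_comp[OF q2 g] .
    have c: "\<forall>y\<in>fst (Mu M e). f (elt M e A a y) = g (elt M e B b y)"
      using Mu_homs_eq[OF M e fq gq] q1e q2e ab by simp
    obtain w where w: "mhom M (Mu M e) P w"
      and wp: "\<forall>y\<in>fst (Mu M e). p1 (w y) = elt M e A a y \<and> p2 (w y) = elt M e B b y"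
      using univ[OF Q q1 q2 c] by blast
    show "\<exists>x\<in>fst P. p1 x = a \<and> p2 x = b"
      using wp one q1e q2e mhomD(1)[OF w one] by metis
  qed
  show "pbsq M P p1 p2 A B C f g" unfolding pbsq_def using basic inj surj by blast
next
  assume pq: "pbsq M P p1 p2 A B C f g"
  have basic: "rmset M P \<and> rmset M A \<and> rmset M B \<and> rmset M C \<and>
     mhom M P A p1 \<and> mhom M P B p2 \<and> mhom M A C f \<and> mhom M B C g \<and>
     (\<forall>x\<in>fst P. f (p1 x) = g (p2 x))" using pq unfolding pbsq_def by blast
  hence P: "rmset M P" and p1: "mhom M P A p1" and p2: "mhom M P B p2" by blast+
  have inj: "\<And>x x'. x \<in> fst P \<Longrightarrow> x' \<in> fst P \<Longrightarrow> p1 x = p1 x' \<Longrightarrow> p2 x = p2 x' \<Longrightarrow> x = x'"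
    using pq unfolding pbsq_def by blast
  have surj: "\<And>a b. a \<in> fst A \<Longrightarrow> b \<in> fst B \<Longrightarrow> f a = g b \<Longrightarrow> (\<exists>x\<in>fst P. p1 x = a \<and> p2 x = b)"
    using pq unfolding pbsq_def by blast
  have "\<forall>(Q::('x,'m) mobj) q1 q2. rmset M Q \<and> mhom M Q A q1 \<and> mhom M Q B q2 \<and>
          (\<forall>x\<in>fst Q. f (q1 x) = g (q2 x)) \<longrightarrow>
        (\<exists>u. mhom M Q P u \<and> (\<forall>x\<in>fst Q. p1 (u x) = q1 x \<and> p2 (u x) = q2 x) \<and>
           (\<forall>u'. mhom M Q P u' \<and> (\<forall>x\<in>fst Q. p1 (u' x) = q1 x \<and> p2 (u' x) = q2 x)
                 \<longrightarrow> (\<forall>x\<in>fst Q. u' x = u x)))"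
  proof (intro allI impI)
    fix Q :: "('x,'m) mobj" and q1 q2
    assume h: "rmset M Q \<and> mhom M Q A q1 \<and> mhom M Q B q2 \<and> (\<forall>x\<in>fst Q. f (q1 x) = g (q2 x))"
    hence Q: "rmset M Q" and q1: "mhom M Q A q1" and q2: "mhom M Q B q2"
      and c: "\<forall>x\<in>fst Q. f (q1 x) = g (q2 x)" by blast+
    define u where "u y = (SOME x. x \<in> fst P \<and> p1 x = q1 y \<and> p2 x = q2 y)" for y
    have up: "\<And>y. y \<in> fst Q \<Longrightarrow> u y \<in> fst P \<and> p1 (u y) = q1 y \<and> p2 (u y) = q2 y"
    proof -
      fix y assume y: "y \<in> fst Q"
      have "\<exists>x. x \<in> fst P \<and> p1 x = q1 y \<and> p2 x = q2 y"
        using surj[OF mhomD(1)[OF q1 y] mhomD(1)[OF q2 y]] c y by blast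
      thus "u y \<in> fst P \<and> p1 (u y) = q1 y \<and> p2 (u y) = q2 y" unfolding u_def by (rule someI_ex)
    qed
    have uh: "mhom M Q P u"
      unfolding mhom_def
    proof (intro conjI ballI)
      fix y assume "y \<in> fst Q" thus "u y \<in> fst P" using up by blast
    next
      fix y s assume y: "y \<in> fst Q" and s: "s \<in> carrier M"
      have ys: "snd Q y s \<in> fst Q" using rmsetD(1)[OF Q y s] .
      have us: "snd P (u y) s \<in> fst P" using rmsetD(1)[OF P] up[OF y] s by blast
      show "u (snd Q y s) = snd P (u y) s"
      proof (rule inj[OF _ us])
        show "u (snd Q y s) \<in> fst P" using up[OF ys] by blast
        show "p1 (u (snd Q y s)) = p1 (snd P (u y) s)"
          using up[OF ys] up[OF y] mhomD(2)[OF p1 _ s] mhomD(2)[OF q1 y s] by simp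
        show "p2 (u (snd Q y s)) = p2 (snd P (u y) s)"
          using up[OF ys] up[OF y] mhomD(2)[OF p2 _ s] mhomD(2)[OF q2 y s] by simp
      qed
    qed
    show "\<exists>u. mhom M Q P u \<and> (\<forall>x\<in>fst Q. p1 (u x) = q1 x \<and> p2 (u x) = q2 x) \<and>
           (\<forall>u'. mhom M Q P u' \<and> (\<forall>x\<in>fst Q. p1 (u' x) = q1 x \<and> p2 (u' x) = q2 x)
                 \<longrightarrow> (\<forall>x\<in>fst Q. u' x = u x))"
    proof (intro exI[of _ u] conjI allI impI ballI)
      show "mhom M Q P u" using uh .
    next
      fix x assume "x \<in> fst Q" thus "p1 (u x) = q1 x" using up by blast
    next
      fix x assume "x \<in> fst Q" thus "p2 (u x) = q2 x" using up by blast
    next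
      fix u' x assume h': "mhom M Q P u' \<and> (\<forall>x\<in>fst Q. p1 (u' x) = q1 x \<and> p2 (u' x) = q2 x)"
        and x: "x \<in> fst Q"
      show "u' x = u x" using inj[of "u' x" "u x"] h' up[OF x] mhomD(1)[of M Q P u' x] x by auto
    qed
  qed
  thus "is_pullback M P p1 p2 A B C f g" unfolding is_pullback_def using basic by blast
qed

lemma terminal_iff:
  fixes M :: "('m,'b) monoid_scheme" and T :: "('x,'m) mobj" and e :: "'m \<Rightarrow> 'x"
  assumes M: "monoid M" and e: "inj_on e (carrier M)"
  shows "is_terminal M T \<longleftrightarrow> rmset M T \<and> (\<exists>t. fst T = {t})"
proof
  assume tm: "is_terminal M T"
  hence T: "rmset M T" unfolding is_terminal_def by blast
  have Q: "rmset M (Mu M e)" using Mu_rmset[OF M e] .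
  have one: "e \<one>\<^bsub>M\<^esub> \<in> fst (Mu M e)" using monoid.one_closed[OF M] by (simp add: Mu_fst)
  have ex: "\<exists>f. mhom M (Mu M e) T f" using tm Q unfolding is_terminal_def by blast
  have un: "\<forall>f g. mhom M (Mu M e) T f \<longrightarrow> mhom M (Mu M e) T g \<longrightarrow> (\<forall>x\<in>fst (Mu M e). f x = g x)"
    using tm Q unfolding is_terminal_def by blast
  obtain f where f: "mhom M (Mu M e) T f" using ex by blast
  have ne: "f (e \<one>\<^bsub>M\<^esub>) \<in> fst T" using mhomD(1)[OF f one] .
  have "\<forall>t\<in>fst T. t = f (e \<one>\<^bsub>M\<^esub>)"
  proof
    fix t assume t: "t \<in> fst T"
    have "mhom M (Mu M e) T (elt M e T t)" "elt M e T t (e \<one>\<^bsub>M\<^esub>) = t" using elt_hom[OF M e T t] by blast+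
    thus "t = f (e \<one>\<^bsub>M\<^esub>)" using un f one by metis
  qed
  hence "fst T = {f (e \<one>\<^bsub>M\<^esub>)}" using ne by blast
  thus "rmset M T \<and> (\<exists>t. fst T = {t})" using T by blast
next
  assume h: "rmset M T \<and> (\<exists>t. fst T = {t})"
  then obtain t where t: "fst T = {t}" and T: "rmset M T" by blast
  have tt: "\<And>s. s \<in> carrier M \<Longrightarrow> snd T t s = t" using rmsetD(1)[OF T] t by blast
  show "is_terminal M T" unfolding is_terminal_def
  proof (intro conjI T allI impI)
    fix A :: "('x,'m) mobj" assume A: "rmset M A"
    have "mhom M A T (\<lambda>_. t)" unfolding mhom_def using t tt by simp
    thus "\<exists>f. mhom M A T f" by blast
  next
    fix A :: "('x,'m) mobj" and f g assume "mhom M A T f" "mhom M A T g"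
    thus "\<forall>x\<in>fst A. f x = g x" using t mhomD(1) by (metis singletonD)
  qed
qed


lemma refl_basic:
  assumes "is_reflection M L R \<eta>" "rmset M A"
  shows "R A \<in> L" "mhom M A (R A) (\<eta> A)"
  using assms unfolding is_reflection_def by blast+

lemma refl_ext:
  assumes "is_reflection M L R \<eta>" "rmset M A" "B \<in> L" "mhom M A B f"
  shows "\<exists>g. mhom M (R A) B g \<and> (\<forall>x\<in>fst A. g (\<eta> A x) = f x)"
  using assms unfolding is_reflection_def by blast

lemma refl_uniq:
  assumes r: "is_reflection M L R \<eta>" and A: "rmset M A" and B: "B \<in> L"
    and g1: "mhom M (R A) B g1" and g2: "mhom M (R A) B g2"
    and eq: "\<And>x. x \<in> fst A \<Longrightarrow> g1 (\<eta> A x) = g2 (\<eta> A x)"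
    and y: "y \<in> fst (R A)"
  shows "g1 y = g2 y"
proof -
  have f: "mhom M A B (\<lambda>x. g1 (\<eta> A x))" using mhom_comp[OF refl_basic(2)[OF r A] g1] .
  have "\<forall>B\<in>L. \<forall>f. mhom M A B f \<longrightarrow>
        (\<exists>g. mhom M (R A) B g \<and> (\<forall>x\<in>fst A. g (\<eta> A x) = f x) \<and>
           (\<forall>g'. mhom M (R A) B g' \<and> (\<forall>x\<in>fst A. g' (\<eta> A x) = f x)
                 \<longrightarrow> (\<forall>y\<in>fst (R A). g' y = g y)))"
    using r A unfolding is_reflection_def by blast
  then obtain g where
    gu: "\<forall>g'. mhom M (R A) B g' \<and> (\<forall>x\<in>fst A. g' (\<eta> A x) = g1 (\<eta> A x))
                 \<longrightarrow> (\<forall>y\<in>fst (R A). g' y = g y)"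
    using B f by blast
  have "g1 y = g y" using gu g1 y by blast
  moreover have "g2 y = g y" using gu g2 y eq by metis
  ultimately show ?thesis by simp
qed

lemma refl_mor_props:
  assumes r: "is_reflection M L R \<eta>" and A: "rmset M A" and A': "rmset M A'" and h: "mhom M A A' h"
  shows "mhom M (R A) (R A') (refl_mor M R \<eta> A A' h)"
    "\<And>x. x \<in> fst A \<Longrightarrow> refl_mor M R \<eta> A A' h (\<eta> A x) = \<eta> A' (h x)"
proof -
  have "mhom M A (R A') (\<lambda>x. \<eta> A' (h x))" using mhom_comp[OF h refl_basic(2)[OF r A']] .
  hence "\<exists>g. mhom M (R A) (R A') g \<and> (\<forall>x\<in>fst A. g (\<eta> A x) = \<eta> A' (h x))"
    using refl_ext[OF r A refl_basic(1)[OF r A']] by blast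
  hence "mhom M (R A) (R A') (refl_mor M R \<eta> A A' h) \<and> (\<forall>x\<in>fst A. refl_mor M R \<eta> A A' h (\<eta> A x) = \<eta> A' (h x))"
    unfolding refl_mor_def by (rule someI_ex)
  thus "mhom M (R A) (R A') (refl_mor M R \<eta> A A' h)"
    "\<And>x. x \<in> fst A \<Longrightarrow> refl_mor M R \<eta> A A' h (\<eta> A x) = \<eta> A' (h x)" by blast+
qed

lemma refl_mor_unique:
  assumes r: "is_reflection M L R \<eta>" and A: "rmset M A" and A': "rmset M A'" and h: "mhom M A A' h"
    and g: "mhom M (R A) (R A') g" and gh: "\<And>x. x \<in> fst A \<Longrightarrow> g (\<eta> A x) = \<eta> A' (h x)"
    and y: "y \<in> fst (R A)"
  shows "refl_mor M R \<eta> A A' h y = g y"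
  using refl_uniq[OF r A refl_basic(1)[OF r A'] refl_mor_props(1)[OF r A A' h] g _ y]
    refl_mor_props(2)[OF r A A' h] gh by simp

definition trm :: "('x \<Rightarrow> 'y) \<Rightarrow> ('x,'m) mobj \<Rightarrow> ('x \<Rightarrow> 'x) \<Rightarrow> 'y \<Rightarrow> 'y" where
  "trm e X h = (\<lambda>y. e (h (inv_into (fst X) e y)))"

lemma trm_e: "inj_on e (fst X) \<Longrightarrow> x \<in> fst X \<Longrightarrow> trm e X h (e x) = e (h x)"
  unfolding trm_def by simp

lemma trm_hom:
  assumes eX: "inj_on e (fst X)" and eY: "inj_on e (fst Y)" and X: "rmset M X" and h: "mhom M X Y h"
  shows "mhom M (tr e X) (tr e Y) (trm e X h)"
  unfolding mhom_def tr_fst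
proof (intro conjI ballI)
  fix u assume "u \<in> e ` fst X"
  then obtain x where x: "x \<in> fst X" "u = e x" by blast
  show "trm e X h u \<in> e ` fst Y" using x trm_e[OF eX] mhomD(1)[OF h] by simp
next
  fix u s assume "u \<in> e ` fst X" and s: "s \<in> carrier M"
  then obtain x where x: "x \<in> fst X" "u = e x" by blast
  have xs: "snd X x s \<in> fst X" using rmsetD(1)[OF X x(1) s] .
  have hx: "h x \<in> fst Y" using mhomD(1)[OF h x(1)] .
  show "trm e X h (snd (tr e X) u s) = snd (tr e Y) (trm e X h u) s"
    using x tr_act[OF eX x(1)] trm_e[OF eX x(1)] trm_e[OF eX xs] tr_act[OF eY hx] mhomD(2)[OF h x(1) s]
    by simp
qed

lemma pbsq_cong:
  assumes "pbsq M P p1 p2 A B C f g"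
    and "\<And>x. x \<in> fst P \<Longrightarrow> p1' x = p1 x" "\<And>x. x \<in> fst P \<Longrightarrow> p2' x = p2 x"
    and "\<And>x. x \<in> fst A \<Longrightarrow> f' x = f x" "\<And>x. x \<in> fst B \<Longrightarrow> g' x = g x"
  shows "pbsq M P p1' p2' A B C f' g'"
proof -
  have h: "rmset M P" "rmset M A" "rmset M B" "rmset M C" "mhom M P A p1" "mhom M P B p2"
    "mhom M A C f" "mhom M B C g" using assms(1) unfolding pbsq_def by blast+
  have "mhom M P A p1'" using mhom_cong[OF h(1) h(5)] assms(2) by simp
  moreover have "mhom M P B p2'" using mhom_cong[OF h(1) h(6)] assms(3) by simp
  moreover have "mhom M A C f'" using mhom_cong[OF h(2) h(7)] assms(4) by simp
  moreover have "mhom M B C g'" using mhom_cong[OF h(3) h(8)] assms(5) by simp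
  moreover have "\<forall>x\<in>fst P. f' (p1' x) = g' (p2' x)"
    using assms(1) assms(2-5) mhomD(1)[OF h(5)] mhomD(1)[OF h(6)] unfolding pbsq_def by simp
  moreover have "\<forall>x\<in>fst P. \<forall>x'\<in>fst P. p1' x = p1' x' \<and> p2' x = p2' x' \<longrightarrow> x = x'"
    using assms(1) assms(2-3) unfolding pbsq_def by simp
  moreover have "\<forall>a\<in>fst A. \<forall>b\<in>fst B. f' a = g' b \<longrightarrow> (\<exists>x\<in>fst P. p1' x = a \<and> p2' x = b)"
    using assms(1) assms(2-5) unfolding pbsq_def by simp
  ultimately show ?thesis using h(1-4) unfolding pbsq_def by blast
qed

lemma pbsq_tr:
  assumes pb: "pbsq M P p1 p2 A B C f g" and M: "monoid M"
    and eP: "inj_on e (fst P)" and eA: "inj_on e (fst A)" and eB: "inj_on e (fst B)" and eC: "inj_on e (fst C)"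
  shows "pbsq M (tr e P) (trm e P p1) (trm e P p2) (tr e A) (tr e B) (tr e C) (trm e A f) (trm e B g)"
proof -
  have h: "rmset M P" "rmset M A" "rmset M B" "rmset M C" "mhom M P A p1" "mhom M P B p2"
    "mhom M A C f" "mhom M B C g" using pb unfolding pbsq_def by blast+
  have c: "\<forall>x\<in>fst P. f (p1 x) = g (p2 x)"
    and i: "\<forall>x\<in>fst P. \<forall>x'\<in>fst P. p1 x = p1 x' \<and> p2 x = p2 x' \<longrightarrow> x = x'"
    and s: "\<forall>a\<in>fst A. \<forall>b\<in>fst B. f a = g b \<longrightarrow> (\<exists>x\<in>fst P. p1 x = a \<and> p2 x = b)"
    using pb unfolding pbsq_def by blast+
  have "rmset M (tr e P)" "rmset M (tr e A)" "rmset M (tr e B)" "rmset M (tr e C)"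
    using tr_rmset[OF eP h(1) M] tr_rmset[OF eA h(2) M] tr_rmset[OF eB h(3) M] tr_rmset[OF eC h(4) M] .
  moreover have "mhom M (tr e P) (tr e A) (trm e P p1)" "mhom M (tr e P) (tr e B) (trm e P p2)"
    "mhom M (tr e A) (tr e C) (trm e A f)" "mhom M (tr e B) (tr e C) (trm e B g)"
    using trm_hom[OF eP eA h(1) h(5)] trm_hom[OF eP eB h(1) h(6)] trm_hom[OF eA eC h(2) h(7)]
      trm_hom[OF eB eC h(3) h(8)] .
  moreover have "\<forall>u\<in>fst (tr e P). trm e A f (trm e P p1 u) = trm e B g (trm e P p2 u)"
  proof
    fix u assume "u \<in> fst (tr e P)"
    then obtain x where x: "x \<in> fst P" "u = e x" by auto
    show "trm e A f (trm e P p1 u) = trm e B g (trm e P p2 u)"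
      using x trm_e[OF eP x(1)] trm_e[OF eA mhomD(1)[OF h(5) x(1)]] trm_e[OF eB mhomD(1)[OF h(6) x(1)]] c
      by simp
  qed
  moreover have "\<forall>u\<in>fst (tr e P). \<forall>u'\<in>fst (tr e P). trm e P p1 u = trm e P p1 u' \<and> trm e P p2 u = trm e P p2 u' \<longrightarrow> u = u'"
  proof (intro ballI impI)
    fix u u' assume "u \<in> fst (tr e P)" "u' \<in> fst (tr e P)"
      and eq: "trm e P p1 u = trm e P p1 u' \<and> trm e P p2 u = trm e P p2 u'"
    then obtain x x' where x: "x \<in> fst P" "u = e x" and x': "x' \<in> fst P" "u' = e x'" by auto
    have "e (p1 x) = e (p1 x')" "e (p2 x) = e (p2 x')" using eq x x' trm_e[OF eP] by simp_all
    hence "p1 x = p1 x'" "p2 x = p2 x'"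
      using inj_onD[OF eA _ mhomD(1)[OF h(5) x(1)] mhomD(1)[OF h(5) x'(1)]]
        inj_onD[OF eB _ mhomD(1)[OF h(6) x(1)] mhomD(1)[OF h(6) x'(1)]] by blast+
    hence "x = x'" using i x(1) x'(1) by blast
    thus "u = u'" using x x' by simp
  qed
  moreover have "\<forall>a\<in>fst (tr e A). \<forall>b\<in>fst (tr e B). trm e A f a = trm e B g b \<longrightarrow> (\<exists>u\<in>fst (tr e P). trm e P p1 u = a \<and> trm e P p2 u = b)"
  proof (intro ballI impI)
    fix a b assume "a \<in> fst (tr e A)" "b \<in> fst (tr e B)" and eq: "trm e A f a = trm e B g b"
    then obtain a0 b0 where a0: "a0 \<in> fst A" "a = e a0" and b0: "b0 \<in> fst B" "b = e b0" by auto
    have "e (f a0) = e (g b0)" using eq a0 b0 trm_e[OF eA] trm_e[OF eB] by simp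
    hence "f a0 = g b0" using inj_onD[OF eC _ mhomD(1)[OF h(7) a0(1)] mhomD(1)[OF h(8) b0(1)]] by blast
    then obtain x where x: "x \<in> fst P" "p1 x = a0" "p2 x = b0" using s a0 b0 by blast
    show "\<exists>u\<in>fst (tr e P). trm e P p1 u = a \<and> trm e P p2 u = b"
      using x a0 b0 trm_e[OF eP x(1)] by (intro bexI[of _ "e x"]) auto
  qed
  ultimately show ?thesis unfolding pbsq_def by blast
qed


context idm begin

lemma topF_sub: "a \<in> topF M I \<Longrightarrow> a \<subseteq> carrier M"
  unfolding topF_def right_ideal_def by blast

lemma I_topF: "I \<in> topF M I"
  unfolding topF_def using I_ideal unfolding two_sided_ideal_def by blast

lemma sheaf_char:
  "is_sheaf M (topF M I) A \<longleftrightarrow> rmset M A \<and> msep M I A \<and> mext M I A"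
proof
  assume sh: "is_sheaf M (topF M I) A"
  thus "rmset M A \<and> msep M I A \<and> mext M I A"
    using I_topF unfolding is_sheaf_def msep_def mext_def by blast
next
  assume h: "rmset M A \<and> msep M I A \<and> mext M I A"
  hence A: "rmset M A" and sep: "msep M I A" and ex: "mext M I A" by blast+
  have sep': "\<And>x x'. x \<in> fst A \<Longrightarrow> x' \<in> fst A \<Longrightarrow> (\<forall>y\<in>I. snd A x y = snd A x' y) \<Longrightarrow> x = x'"
    using sep unfolding msep_def by blast
  show "is_sheaf M (topF M I) A" unfolding is_sheaf_def
  proof (intro conjI A ballI allI impI)
    fix a x x' assume a: "a \<in> topF M I" and x: "x \<in> fst A" and x': "x' \<in> fst A"
      and eq: "\<forall>y\<in>a. snd A x y = snd A x' y"
    have "I \<subseteq> a" using a unfolding topF_def by blast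
    thus "x = x'" using sep'[OF x x'] eq by blast
  next
    fix a \<phi> assume a: "a \<in> topF M I" and ph: "mhom M (a, mult M) A \<phi>"
    have Ia: "I \<subseteq> a" and aM: "a \<subseteq> carrier M" using a unfolding topF_def right_ideal_def by blast+
    have "mhom M (I, mult M) A \<phi>" using ph Ia unfolding mhom_def by auto
    then obtain x where x: "x \<in> fst A" and hx: "\<forall>y\<in>I. \<phi> y = snd A x y"
      using ex unfolding mext_def by blast
    have "\<forall>y\<in>a. \<phi> y = snd A x y"
    proof
      fix y assume y: "y \<in> a"
      have yM: "y \<in> carrier M" using y aM by blast
      have py: "\<phi> y \<in> fst A" using mhomD(1)[OF ph] y by simp
      have xy: "snd A x y \<in> fst A" using rmsetD(1)[OF A x yM] .
      show "\<phi> y = snd A x y"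
      proof (rule sep'[OF py xy], rule ballI)
        fix t assume t: "t \<in> I"
        have yt: "y \<otimes> t \<in> I" using I_left[OF t yM] .
        have "snd A (\<phi> y) t = \<phi> (y \<otimes> t)" using mhomD(2)[OF ph, of y t] y I_carr[OF t] by simp
        also have "\<dots> = snd A x (y \<otimes> t)" using hx yt by simp
        also have "\<dots> = snd A (snd A x y) t" using rmsetD(3)[OF A x yM I_carr[OF t]] .
        finally show "snd A (\<phi> y) t = snd A (snd A x y) t" .
      qed
    qed
    thus "\<exists>x\<in>fst A. \<forall>y\<in>a. \<phi> y = snd A x y" using x by blast
  qed
qed

lemma Pmap_app: "y \<in> I \<Longrightarrow> Pmap h \<phi> y = h (\<phi> y)"
  by (simp add: Pmap_def)

lemma P_pb:
  assumes pb: "pbsq M P0 p1 p2 A B C f g"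
  shows "pbsq M (Pobj P0) (Pmap p1) (Pmap p2) (Pobj A) (Pobj B) (Pobj C) (Pmap f) (Pmap g)"
proof -
  have h: "rmset M P0" "rmset M A" "rmset M B" "rmset M C" "mhom M P0 A p1" "mhom M P0 B p2"
    "mhom M A C f" "mhom M B C g" using pb unfolding pbsq_def by blast+
  have c: "\<forall>x\<in>fst P0. f (p1 x) = g (p2 x)"
    and i: "\<And>x x'. x\<in>fst P0 \<Longrightarrow> x'\<in>fst P0 \<Longrightarrow> p1 x = p1 x' \<Longrightarrow> p2 x = p2 x' \<Longrightarrow> x = x'"
    and s: "\<forall>a\<in>fst A. \<forall>b\<in>fst B. f a = g b \<longrightarrow> (\<exists>x\<in>fst P0. p1 x = a \<and> p2 x = b)"
    using pb unfolding pbsq_def by blast+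
  have r: "rmset M (Pobj P0)" "rmset M (Pobj A)" "rmset M (Pobj B)" "rmset M (Pobj C)"
    using P_rmset h(1-4) by blast+
  have m: "mhom M (Pobj P0) (Pobj A) (Pmap p1)" "mhom M (Pobj P0) (Pobj B) (Pmap p2)"
    "mhom M (Pobj A) (Pobj C) (Pmap f)" "mhom M (Pobj B) (Pobj C) (Pmap g)"
    using Pmap_hom h(5-8) by blast+
  have c': "\<forall>\<phi>\<in>fst (Pobj P0). Pmap f (Pmap p1 \<phi>) = Pmap g (Pmap p2 \<phi>)"
  proof
    fix \<phi> assume ph: "\<phi> \<in> fst (Pobj P0)"
    have v: "\<And>y. y \<in> I \<Longrightarrow> \<phi> y \<in> fst P0" using ph unfolding Pobj_mem by blast
    show "Pmap f (Pmap p1 \<phi>) = Pmap g (Pmap p2 \<phi>)"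
      by (rule ext_eqI) (auto simp: Pmap_def c v)
  qed
  have i': "\<forall>\<phi>\<in>fst (Pobj P0). \<forall>\<phi>'\<in>fst (Pobj P0). Pmap p1 \<phi> = Pmap p1 \<phi>' \<and> Pmap p2 \<phi> = Pmap p2 \<phi>' \<longrightarrow> \<phi> = \<phi>'"
  proof (intro ballI impI)
    fix \<phi> \<phi>' assume ph: "\<phi> \<in> fst (Pobj P0)" and ph': "\<phi>' \<in> fst (Pobj P0)"
      and eq: "Pmap p1 \<phi> = Pmap p1 \<phi>' \<and> Pmap p2 \<phi> = Pmap p2 \<phi>'"
    have e: "\<phi> \<in> extensional I" "\<phi>' \<in> extensional I" using ph ph' unfolding Pobj_mem by blast+
    show "\<phi> = \<phi>'"
    proof (rule ext_eqI[OF e])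
      fix y assume y: "y \<in> I"
      have "p1 (\<phi> y) = p1 (\<phi>' y)" "p2 (\<phi> y) = p2 (\<phi>' y)"
        using eq Pmap_app[OF y, of p1] Pmap_app[OF y, of p2] by metis+
      thus "\<phi> y = \<phi>' y" using i ph ph' y unfolding Pobj_mem by blast
    qed
  qed
  have s': "\<forall>\<alpha>\<in>fst (Pobj A). \<forall>\<beta>\<in>fst (Pobj B). Pmap f \<alpha> = Pmap g \<beta> \<longrightarrow>
      (\<exists>\<phi>\<in>fst (Pobj P0). Pmap p1 \<phi> = \<alpha> \<and> Pmap p2 \<phi> = \<beta>)"
  proof (intro ballI impI)
    fix \<alpha> \<beta> assume al: "\<alpha> \<in> fst (Pobj A)" and be: "\<beta> \<in> fst (Pobj B)" and eq: "Pmap f \<alpha> = Pmap g \<beta>"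
    have al': "\<alpha> \<in> extensional I" "\<And>y. y \<in> I \<Longrightarrow> \<alpha> y \<in> fst A"
      "\<And>y s. y \<in> I \<Longrightarrow> s \<in> carrier M \<Longrightarrow> \<alpha> (y \<otimes> s) = snd A (\<alpha> y) s"
      using al unfolding Pobj_mem by blast+
    have be': "\<beta> \<in> extensional I" "\<And>y. y \<in> I \<Longrightarrow> \<beta> y \<in> fst B"
      "\<And>y s. y \<in> I \<Longrightarrow> s \<in> carrier M \<Longrightarrow> \<beta> (y \<otimes> s) = snd B (\<beta> y) s"
      using be unfolding Pobj_mem by blast+
    have fg: "\<And>y. y \<in> I \<Longrightarrow> f (\<alpha> y) = g (\<beta> y)" using eq Pmap_app by metis
    define \<phi> where "\<phi> = restrict (\<lambda>y. SOME x. x \<in> fst P0 \<and> p1 x = \<alpha> y \<and> p2 x = \<beta> y) I"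
    have phv: "\<And>y. y \<in> I \<Longrightarrow> \<phi> y \<in> fst P0 \<and> p1 (\<phi> y) = \<alpha> y \<and> p2 (\<phi> y) = \<beta> y"
    proof -
      fix y assume y: "y \<in> I"
      have "\<exists>x. x \<in> fst P0 \<and> p1 x = \<alpha> y \<and> p2 x = \<beta> y" using s al'(2)[OF y] be'(2)[OF y] fg[OF y] by blast
      hence "(SOME x. x \<in> fst P0 \<and> p1 x = \<alpha> y \<and> p2 x = \<beta> y) \<in> fst P0 \<and>
          p1 (SOME x. x \<in> fst P0 \<and> p1 x = \<alpha> y \<and> p2 x = \<beta> y) = \<alpha> y \<and>
          p2 (SOME x. x \<in> fst P0 \<and> p1 x = \<alpha> y \<and> p2 x = \<beta> y) = \<beta> y" by (rule someI_ex)
      thus "\<phi> y \<in> fst P0 \<and> p1 (\<phi> y) = \<alpha> y \<and> p2 (\<phi> y) = \<beta> y" using y unfolding \<phi>_def by simp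
    qed
    have phP: "\<phi> \<in> fst (Pobj P0)" unfolding Pobj_mem
    proof (intro conjI ballI)
      show "\<phi> \<in> extensional I" unfolding \<phi>_def by simp
    next
      fix y assume "y \<in> I" thus "\<phi> y \<in> fst P0" using phv by blast
    next
      fix y s assume y: "y \<in> I" and s: "s \<in> carrier M"
      have ys: "y \<otimes> s \<in> I" using I_right[OF y s] .
      have a: "\<phi> y \<in> fst P0" using phv[OF y] by blast
      show "\<phi> (y \<otimes> s) = snd P0 (\<phi> y) s"
      proof (rule i)
        show "\<phi> (y \<otimes> s) \<in> fst P0" using phv[OF ys] by blast
        show "snd P0 (\<phi> y) s \<in> fst P0" using rmsetD(1)[OF h(1) a s] .
        show "p1 (\<phi> (y \<otimes> s)) = p1 (snd P0 (\<phi> y) s)"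
          using phv[OF ys] phv[OF y] mhomD(2)[OF h(5) a s] al'(3)[OF y s] by simp
        show "p2 (\<phi> (y \<otimes> s)) = p2 (snd P0 (\<phi> y) s)"
          using phv[OF ys] phv[OF y] mhomD(2)[OF h(6) a s] be'(3)[OF y s] by simp
      qed
    qed
    have "Pmap p1 \<phi> = \<alpha>" by (rule ext_eqI) (auto simp: Pmap_def phv al'(1))
    moreover have "Pmap p2 \<phi> = \<beta>" by (rule ext_eqI) (auto simp: Pmap_def phv be'(1))
    ultimately show "\<exists>\<phi>\<in>fst (Pobj P0). Pmap p1 \<phi> = \<alpha> \<and> Pmap p2 \<phi> = \<beta>" using phP by blast
  qed
  show ?thesis unfolding pbsq_def using r m c' i' s' by blast
qed

end


locale idmu = idm M I for M :: "('m,'b) monoid_scheme" (structure) and I :: "'m set" +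
  fixes enc :: "('m \<Rightarrow> 'm \<Rightarrow> 'u) \<Rightarrow> 'u" and emb :: "'m \<Rightarrow> 'u"
  assumes enc_inj: "inj_on enc {\<Phi>. \<Phi> \<in> extensional I \<and> (\<forall>s\<in>I. \<Phi> s \<in> extensional I)}"
    and emb_inj: "inj_on emb (carrier M)"
begin

definition RR :: "('u,'m) mobj \<Rightarrow> ('u,'m) mobj" where
  "RR A = tr enc (Pobj (Pobj A))"

definition ee :: "('u,'m) mobj \<Rightarrow> 'u \<Rightarrow> 'u" where
  "ee A x = enc (etaP (Pobj A) (etaP A x))"

definition Rm :: "('u,'m) mobj \<Rightarrow> ('u \<Rightarrow> 'u) \<Rightarrow> 'u \<Rightarrow> 'u" where
  "Rm A h = trm enc (Pobj (Pobj A)) (Pmap (Pmap h))"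

lemma PP_inj: "inj_on enc (fst (Pobj (Pobj (A::('u,'m) mobj))))"
proof (rule inj_on_subset[OF enc_inj], rule subsetI)
  fix \<Phi> assume "\<Phi> \<in> fst (Pobj (Pobj A))"
  hence "\<Phi> \<in> extensional I" "\<forall>s\<in>I. \<Phi> s \<in> fst (Pobj A)" unfolding Pobj_mem by blast+
  thus "\<Phi> \<in> {\<Phi>. \<Phi> \<in> extensional I \<and> (\<forall>s\<in>I. \<Phi> s \<in> extensional I)}" unfolding Pobj_mem by blast
qed

lemma PP_rmset: "rmset M A \<Longrightarrow> rmset M (Pobj (Pobj A))"
  by (intro P_rmset)

lemma RR_rmset: "rmset M A \<Longrightarrow> rmset M (RR A)"
  unfolding RR_def by (rule tr_rmset[OF PP_inj PP_rmset monoid_axioms])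

lemma topF_subs: "\<forall>a\<in>topF M I. a \<subseteq> carrier M" using topF_sub by blast

lemma PP_sheaf: "rmset M A \<Longrightarrow> is_sheaf M (topF M I) (Pobj (Pobj A))"
proof -
  assume A: "rmset M A"
  show ?thesis unfolding sheaf_char
    using PP_rmset[OF A] P_sep[OF P_rmset[OF A]] P_ext[OF P_rmset[OF A] P_sep[OF A]] by blast
qed

lemma RR_sheaf: "rmset M A \<Longrightarrow> is_sheaf M (topF M I) (RR A)"
proof -
  assume A: "rmset M A"
  show ?thesis unfolding RR_def
    by (rule sheaf_iso[OF tr_iso[OF PP_inj PP_rmset[OF A]] PP_sheaf[OF A] monoid_axioms topF_subs])
qed

lemma ee_hom: "rmset M A \<Longrightarrow> mhom M A (RR A) (ee A)"
proof -
  assume A: "rmset M A"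
  have "mhom M A (Pobj (Pobj A)) (\<lambda>x. etaP (Pobj A) (etaP A x))"
    using mhom_comp[OF etaP_hom[OF A] etaP_hom[OF P_rmset[OF A]]] .
  from mhom_comp[OF this tr_hom1[OF PP_inj PP_rmset[OF A]]]
  show ?thesis unfolding RR_def ee_def .
qed

lemma reflection: "is_reflection M (Sh M (topF M I)) RR ee"
  unfolding is_reflection_def
proof (intro allI impI conjI ballI)
  fix A :: "('u,'m) mobj" assume A: "rmset M A"
  show "RR A \<in> Sh M (topF M I)" using RR_sheaf[OF A] by (simp add: Sh_def)
  show "mhom M A (RR A) (ee A)" using ee_hom[OF A] .
  fix B :: "('u,'m) mobj" and f assume B: "B \<in> Sh M (topF M I)" and f: "mhom M A B f"
  have Bs: "rmset M B" "msep M I B" "mext M I B" using B unfolding Sh_def sheaf_char by blast+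
  obtain g1 where g1: "mhom M (Pobj A) B g1" and g1e: "\<forall>x\<in>fst A. g1 (etaP A x) = f x"
    using ext_exists[OF A Bs f] by blast
  obtain g2 where g2: "mhom M (Pobj (Pobj A)) B g2" and g2e: "\<forall>x\<in>fst (Pobj A). g2 (etaP (Pobj A) x) = g1 x"
    using ext_exists[OF P_rmset[OF A] Bs g1] by blast
  define g where "g = (\<lambda>y. g2 (inv_into (fst (Pobj (Pobj A))) enc y))"
  have gh: "mhom M (RR A) B g" unfolding RR_def g_def
    using mhom_comp[OF tr_hom2[OF PP_inj PP_rmset[OF A]] g2] .
  have ge: "\<forall>x\<in>fst A. g (ee A x) = f x"
  proof
    fix x assume x: "x \<in> fst A"
    have m: "etaP (Pobj A) (etaP A x) \<in> fst (Pobj (Pobj A))"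
      using etaP_mem[OF P_rmset[OF A] etaP_mem[OF A x]] .
    have "g (ee A x) = g2 (etaP (Pobj A) (etaP A x))"
      unfolding g_def ee_def using inv_into_f_f[OF PP_inj m] by simp
    also have "\<dots> = f x" using g2e g1e etaP_mem[OF A x] x by simp
    finally show "g (ee A x) = f x" .
  qed
  have gu: "\<forall>g'. mhom M (RR A) B g' \<and> (\<forall>x\<in>fst A. g' (ee A x) = f x) \<longrightarrow> (\<forall>y\<in>fst (RR A). g' y = g y)"
  proof (intro allI impI ballI)
    fix g' y assume h: "mhom M (RR A) B g' \<and> (\<forall>x\<in>fst A. g' (ee A x) = f x)" and y: "y \<in> fst (RR A)"
    have g'h: "mhom M (RR A) B g'" and g'e: "\<forall>x\<in>fst A. g' (ee A x) = f x" using h by blast+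
    have k: "mhom M (Pobj (Pobj A)) B (\<lambda>\<Phi>. g' (enc \<Phi>))"
      using mhom_comp[OF tr_hom1[OF PP_inj PP_rmset[OF A]] g'h[unfolded RR_def]] .
    have k1: "mhom M (Pobj A) B (\<lambda>\<phi>. g' (enc (etaP (Pobj A) \<phi>)))"
      using mhom_comp[OF etaP_hom[OF P_rmset[OF A]] k] .
    have s1: "\<And>\<phi>. \<phi> \<in> fst (Pobj A) \<Longrightarrow> g' (enc (etaP (Pobj A) \<phi>)) = g1 \<phi>"
      using ext_unique[OF A Bs(2) k1 g1] g'e g1e unfolding ee_def by simp
    have s2: "\<And>\<Phi>. \<Phi> \<in> fst (Pobj (Pobj A)) \<Longrightarrow> g' (enc \<Phi>) = g2 \<Phi>"
      using ext_unique[OF P_rmset[OF A] Bs(2) k g2] s1 g2e by simp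
    obtain \<Phi> where P: "\<Phi> \<in> fst (Pobj (Pobj A))" "y = enc \<Phi>" using y unfolding RR_def by auto
    show "g' y = g y" unfolding g_def using P s2 inv_into_f_f[OF PP_inj P(1)] by simp
  qed
  show "\<exists>g. mhom M (RR A) B g \<and> (\<forall>x\<in>fst A. g (ee A x) = f x) \<and>
           (\<forall>g'. mhom M (RR A) B g' \<and> (\<forall>x\<in>fst A. g' (ee A x) = f x)
                 \<longrightarrow> (\<forall>y\<in>fst (RR A). g' y = g y))"
    using gh ge gu by blast
qed

lemma Rm_props:
  assumes A: "rmset M A" and A': "rmset M A'" and h: "mhom M A A' h"
  shows "mhom M (RR A) (RR A') (Rm A h)" "\<And>x. x \<in> fst A \<Longrightarrow> Rm A h (ee A x) = ee A' (h x)"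
proof -
  show "mhom M (RR A) (RR A') (Rm A h)" unfolding RR_def Rm_def
    by (rule trm_hom[OF PP_inj PP_inj PP_rmset[OF A] Pmap_hom[OF Pmap_hom[OF h]]])
  fix x assume x: "x \<in> fst A"
  have m: "etaP (Pobj A) (etaP A x) \<in> fst (Pobj (Pobj A))"
    using etaP_mem[OF P_rmset[OF A] etaP_mem[OF A x]] .
  have "Pmap (Pmap h) (etaP (Pobj A) (etaP A x)) = etaP (Pobj A') (Pmap h (etaP A x))"
    using Pmap_nat[OF Pmap_hom[OF h] etaP_mem[OF A x]] .
  also have "\<dots> = etaP (Pobj A') (etaP A' (h x))" using Pmap_nat[OF h x] by simp
  finally show "Rm A h (ee A x) = ee A' (h x)"
    unfolding Rm_def ee_def using trm_e[OF PP_inj m] by simp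
qed

lemma refl_mor_RR:
  assumes A: "rmset M A" and A': "rmset M A'" and h: "mhom M A A' h" and y: "y \<in> fst (RR A)"
  shows "refl_mor M RR ee A A' h y = Rm A h y"
  using refl_mor_unique[OF reflection A A' h Rm_props(1)[OF A A' h] Rm_props(2)[OF A A' h] y] .

lemma full_rep: "full_replete M (Sh M (topF M I) :: ('u,'m) mobj set)"
  unfolding full_replete_def
proof (intro conjI allI impI subsetI)
  fix A :: "('u,'m) mobj" assume "A \<in> Sh M (topF M I)"
  thus "A \<in> {A. rmset M A}" unfolding Sh_def is_sheaf_def by blast
next
  fix A B :: "('u,'m) mobj" assume a: "A \<in> Sh M (topF M I)" and "rmset M B" and i: "miso M A B"
  have "is_sheaf M (topF M I) A" using a by (simp add: Sh_def)
  from sheaf_iso[OF i this monoid_axioms topF_subs]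
  show "B \<in> Sh M (topF M I)" by (simp add: Sh_def)
qed

lemma RR_terminal:
  fixes T :: "('u,'m) mobj"
  assumes "is_terminal M T"
  shows "is_terminal M (RR T)"
proof -
  have T: "rmset M T" and t: "\<exists>t. fst T = {t}" using assms terminal_iff[OF monoid_axioms emb_inj] by blast+
  obtain t where t: "fst T = {t}" using t by blast
  have "fst (Pobj T) = {restrict (\<lambda>_. t) I}" using P_terminal[OF t T] .
  from P_terminal[OF this P_rmset[OF T]]
  have "fst (Pobj (Pobj T)) = {restrict (\<lambda>_. restrict (\<lambda>_. t) I) I}" .
  hence "\<exists>t. fst (RR T) = {t}" unfolding RR_def by simp
  thus "is_terminal M (RR T)" using terminal_iff[OF monoid_axioms emb_inj] RR_rmset[OF T] by blast
qed

lemma RR_pullback: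
  fixes P A B C :: "('u,'m) mobj"
  assumes "is_pullback M P p1 p2 A B C f g"
  shows "is_pullback M (RR P) (refl_mor M RR ee P A p1) (refl_mor M RR ee P B p2)
              (RR A) (RR B) (RR C) (refl_mor M RR ee A C f) (refl_mor M RR ee B C g)"
proof -
  have pb: "pbsq M P p1 p2 A B C f g" using assms pullback_iff[OF monoid_axioms emb_inj] by blast
  have h: "rmset M P" "rmset M A" "rmset M B" "rmset M C" "mhom M P A p1" "mhom M P B p2"
    "mhom M A C f" "mhom M B C g" using pb unfolding pbsq_def by blast+
  have pb2: "pbsq M (Pobj (Pobj P)) (Pmap (Pmap p1)) (Pmap (Pmap p2)) (Pobj (Pobj A)) (Pobj (Pobj B))
      (Pobj (Pobj C)) (Pmap (Pmap f)) (Pmap (Pmap g))" using P_pb[OF P_pb[OF pb]] .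
  have pb3: "pbsq M (RR P) (Rm P p1) (Rm P p2) (RR A) (RR B) (RR C) (Rm A f) (Rm B g)"
    unfolding RR_def Rm_def using pbsq_tr[OF pb2 monoid_axioms PP_inj PP_inj PP_inj PP_inj] .
  have pb4: "pbsq M (RR P) (refl_mor M RR ee P A p1) (refl_mor M RR ee P B p2) (RR A) (RR B) (RR C)
      (refl_mor M RR ee A C f) (refl_mor M RR ee B C g)"
  proof (rule pbsq_cong[OF pb3])
    show "\<And>x. x \<in> fst (RR P) \<Longrightarrow> refl_mor M RR ee P A p1 x = Rm P p1 x"
      using refl_mor_RR[OF h(1) h(2) h(5)] .
    show "\<And>x. x \<in> fst (RR P) \<Longrightarrow> refl_mor M RR ee P B p2 x = Rm P p2 x"
      using refl_mor_RR[OF h(1) h(3) h(6)] .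
    show "\<And>x. x \<in> fst (RR A) \<Longrightarrow> refl_mor M RR ee A C f x = Rm A f x"
      using refl_mor_RR[OF h(2) h(4) h(7)] .
    show "\<And>x. x \<in> fst (RR B) \<Longrightarrow> refl_mor M RR ee B C g x = Rm B g x"
      using refl_mor_RR[OF h(3) h(4) h(8)] .
  qed
  thus ?thesis using pullback_iff[OF monoid_axioms emb_inj] by blast
qed

theorem localising_Sh: "localising M (Sh M (topF M I) :: ('u,'m) mobj set)"
  unfolding localising_def
  apply (rule conjI[OF full_rep])
  apply (rule exI[of _ RR], rule exI[of _ ee])
  apply (intro conjI reflection allI impI RR_terminal)
   apply assumption
  apply (rule RR_pullback)
  apply assumption
  done

end


locale locB = monoid M for M :: "('m,'b) monoid_scheme" (structure) +
  fixes L :: "('u,'m) mobj set" and R :: "('u,'m) mobj \<Rightarrow> ('u,'m) mobj"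
    and \<eta> :: "('u,'m) mobj \<Rightarrow> 'u \<Rightarrow> 'u" and emb :: "'m \<Rightarrow> 'u" and pr :: "'u \<times> 'u \<Rightarrow> 'u"
  assumes frep: "full_replete M L" and refl: "is_reflection M L R \<eta>"
    and pbpres: "\<And>P p1 p2 A B C f g. is_pullback M P p1 p2 A B C f g \<Longrightarrow>
            is_pullback M (R P) (refl_mor M R \<eta> P A p1) (refl_mor M R \<eta> P B p2)
              (R A) (R B) (R C) (refl_mor M R \<eta> A C f) (refl_mor M R \<eta> B C g)"
    and emb_inj: "inj_on emb (carrier M)" and pr_inj: "inj pr" and fin: "finite (carrier M)"
begin

abbreviation Rf where "Rf X Y h \<equiv> refl_mor M R \<eta> X Y h"

lemma L_rmset: "B \<in> L \<Longrightarrow> rmset M B" using frep unfolding full_replete_def by blast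

lemma RL: "rmset M X \<Longrightarrow> R X \<in> L" using refl_basic(1)[OF refl] .
lemma R_rmset: "rmset M X \<Longrightarrow> rmset M (R X)" using L_rmset RL by blast
lemma eta_hom: "rmset M X \<Longrightarrow> mhom M X (R X) (\<eta> X)" using refl_basic(2)[OF refl] .

lemma Rf_hom: "rmset M X \<Longrightarrow> rmset M Y \<Longrightarrow> mhom M X Y h \<Longrightarrow> mhom M (R X) (R Y) (Rf X Y h)"
  using refl_mor_props(1)[OF refl] .
lemma Rf_eta: "rmset M X \<Longrightarrow> rmset M Y \<Longrightarrow> mhom M X Y h \<Longrightarrow> x \<in> fst X \<Longrightarrow> Rf X Y h (\<eta> X x) = \<eta> Y (h x)"
  using refl_mor_props(2)[OF refl] .

lemma Rf_id:
  assumes X: "rmset M X" and w: "w \<in> fst (R X)"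
  shows "Rf X X (\<lambda>x. x) w = w"
  using refl_mor_unique[OF refl X X mhom_id[OF X] mhom_id[OF R_rmset[OF X]] _ w] by simp

lemma Rf_comp:
  assumes X: "rmset M X" and Y: "rmset M Y" and Z: "rmset M Z" and h: "mhom M X Y h" and k: "mhom M Y Z k"
    and w: "w \<in> fst (R X)"
  shows "Rf X Z (\<lambda>x. k (h x)) w = Rf Y Z k (Rf X Y h w)"
proof (rule refl_mor_unique[OF refl X Z mhom_comp[OF h k] mhom_comp[OF Rf_hom[OF X Y h] Rf_hom[OF Y Z k]] _ w])
  fix x assume x: "x \<in> fst X"
  show "Rf Y Z k (Rf X Y h (\<eta> X x)) = \<eta> Z (k (h x))"
    using Rf_eta[OF X Y h x] Rf_eta[OF Y Z k mhomD(1)[OF h x]] by simp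
qed

lemma Rf_cong:
  assumes X: "rmset M X" and Y: "rmset M Y" and h: "mhom M X Y h" and eq: "\<And>x. x \<in> fst X \<Longrightarrow> h' x = h x"
    and w: "w \<in> fst (R X)"
  shows "Rf X Y h' w = Rf X Y h w"
proof -
  have h': "mhom M X Y h'" using mhom_cong[OF X h] eq by simp
  show ?thesis
  proof (rule refl_mor_unique[OF refl X Y h' Rf_hom[OF X Y h] _ w])
    fix x assume x: "x \<in> fst X"
    show "Rf X Y h (\<eta> X x) = \<eta> Y (h' x)" using Rf_eta[OF X Y h x] eq[OF x] by simp
  qed
qed

lemma Rf_eta_eq:
  assumes X: "rmset M X" and w: "w \<in> fst (R X)"
  shows "Rf X (R X) (\<eta> X) w = \<eta> (R X) w"
proof (rule refl_mor_unique[OF refl X R_rmset[OF X] eta_hom[OF X] eta_hom[OF R_rmset[OF X]] _ w])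
  fix x assume "x \<in> fst X" show "\<eta> (R X) (\<eta> X x) = \<eta> (R X) (\<eta> X x)" ..
qed

lemma pbR:
  assumes "pbsq M P p1 p2 A B C f g"
  shows "pbsq M (R P) (Rf P A p1) (Rf P B p2) (R A) (R B) (R C) (Rf A C f) (Rf B C g)"
  using pbpres assms pullback_iff[OF monoid_axioms emb_inj] by blast

lemma R_mono:
  assumes X: "rmset M X" and Y: "rmset M Y" and h: "mhom M X Y h"
    and inj: "inj_on h (fst X)"
    and w: "w \<in> fst (R X)" and w': "w' \<in> fst (R X)" and eq: "Rf X Y h w = Rf X Y h w'"
  shows "w = w'"
proof -
  have "pbsq M X (\<lambda>x. x) (\<lambda>x. x) X X Y h h"
    unfolding pbsq_def using X Y h mhom_id[OF X] inj_onD[OF inj] by blast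
  hence "pbsq M (R X) (Rf X X (\<lambda>x. x)) (Rf X X (\<lambda>x. x)) (R X) (R X) (R Y) (Rf X Y h) (Rf X Y h)"
    by (rule pbR)
  then obtain v where "v \<in> fst (R X)" "Rf X X (\<lambda>x. x) v = w" "Rf X X (\<lambda>x. x) v = w'"
    using w w' eq unfolding pbsq_def by blast
  thus "w = w'" by simp
qed

definition Mo :: "('u,'m) mobj" where "Mo = Mu M emb"
definition dec :: "'u \<Rightarrow> 'm" where "dec u = inv_into (carrier M) emb u"
definition Aobj :: "'m set \<Rightarrow> ('u,'m) mobj" where "Aobj a = (emb ` a, snd Mo)"
definition lam :: "'m \<Rightarrow> 'u \<Rightarrow> 'u" where "lam y u = emb (y \<otimes> dec u)"
definition colon :: "'m set \<Rightarrow> 'm \<Rightarrow> 'm set" where "colon a y = {t \<in> carrier M. y \<otimes> t \<in> a}"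
definition dense :: "'m set \<Rightarrow> bool" where
  "dense a \<longleftrightarrow> right_ideal M a \<and> (\<exists>v\<in>fst (R (Aobj a)). Rf (Aobj a) Mo (\<lambda>x. x) v = \<eta> Mo (emb \<one>))"

lemma Mo_rmset: "rmset M Mo" unfolding Mo_def using Mu_rmset[OF monoid_axioms emb_inj] .
lemma Mo_fst: "fst Mo = emb ` carrier M" unfolding Mo_def by (simp add: Mu_fst)
lemma dec_emb[simp]: "s \<in> carrier M \<Longrightarrow> dec (emb s) = s" unfolding dec_def using emb_inj by simp
lemma Mo_act: "s \<in> carrier M \<Longrightarrow> snd Mo (emb s) t = emb (s \<otimes> t)"
  unfolding Mo_def using Mu_act[OF emb_inj] by simp
lemma one_Mo: "emb \<one> \<in> fst Mo" by (simp add: Mo_fst)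

lemma ri_sub: "right_ideal M a \<Longrightarrow> a \<subseteq> carrier M" unfolding right_ideal_def by blast
lemma ri_mult: "right_ideal M a \<Longrightarrow> s \<in> a \<Longrightarrow> t \<in> carrier M \<Longrightarrow> s \<otimes> t \<in> a"
  unfolding right_ideal_def by blast

lemma Aobj_fst: "fst (Aobj a) = emb ` a" by (simp add: Aobj_def)
lemma Aobj_act: "snd (Aobj a) = snd Mo" by (simp add: Aobj_def)

lemma Aobj_rmset:
  assumes a: "right_ideal M a" shows "rmset M (Aobj a)"
  unfolding rmset_def Aobj_fst Aobj_act
proof (intro conjI ballI)
  fix u t assume "u \<in> emb ` a" and t: "t \<in> carrier M"
  then obtain s where s: "s \<in> a" "u = emb s" by blast
  have sM: "s \<in> carrier M" using s(1) ri_sub[OF a] by blast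
  show "snd Mo u t \<in> emb ` a" using s Mo_act[OF sM] ri_mult[OF a s(1) t] by simp
next
  fix u assume "u \<in> emb ` a"
  hence "u \<in> fst Mo" using ri_sub[OF a] Mo_fst by blast
  thus "snd Mo u \<one> = u" using rmsetD(2)[OF Mo_rmset] by simp
next
  fix u t r assume "u \<in> emb ` a" and t: "t \<in> carrier M" and r: "r \<in> carrier M"
  hence "u \<in> fst Mo" using ri_sub[OF a] Mo_fst by blast
  thus "snd Mo u (t \<otimes> r) = snd Mo (snd Mo u t) r" using rmsetD(3)[OF Mo_rmset] t r by simp
qed

lemma carrier_ri: "right_ideal M (carrier M)" unfolding right_ideal_def by simp

lemma Aobj_carrier: "Aobj (carrier M) = Mo"
  unfolding Aobj_def by (simp add: Mo_fst[symmetric])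

lemma Aobj_incl:
  assumes a: "right_ideal M a" and b: "right_ideal M b" and ab: "a \<subseteq> b"
  shows "mhom M (Aobj a) (Aobj b) (\<lambda>x. x)"
  unfolding mhom_def Aobj_act Aobj_fst
proof (intro conjI ballI)
  fix u assume "u \<in> emb ` a" thus "u \<in> emb ` b" using ab by blast
next
  fix u t assume "u \<in> emb ` a" "t \<in> carrier M" thus "snd Mo u t = snd Mo u t" by simp
qed

lemma Aobj_Mo: "right_ideal M a \<Longrightarrow> mhom M (Aobj a) Mo (\<lambda>x. x)"
  using Aobj_incl[OF _ carrier_ri] ri_sub Aobj_carrier by metis

lemma lam_Mo: "y \<in> carrier M \<Longrightarrow> mhom M Mo Mo (lam y)"
  unfolding mhom_def Mo_fst
proof (intro conjI ballI)
  fix u assume y: "y \<in> carrier M" and "u \<in> emb ` carrier M"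
  then obtain s where s: "s \<in> carrier M" "u = emb s" by blast
  show "lam y u \<in> emb ` carrier M" unfolding lam_def using s y by simp
next
  fix u t assume y: "y \<in> carrier M" and "u \<in> emb ` carrier M" and t: "t \<in> carrier M"
  then obtain s where s: "s \<in> carrier M" "u = emb s" by blast
  show "lam y (snd Mo u t) = snd Mo (lam y u) t"
    unfolding lam_def using s y t Mo_act by (simp add: m_assoc)
qed

lemma colon_ri: "right_ideal M a \<Longrightarrow> y \<in> carrier M \<Longrightarrow> right_ideal M (colon a y)"
  unfolding colon_def right_ideal_def by (auto simp: m_assoc[symmetric])

lemma lam_colon:
  assumes a: "right_ideal M a" and y: "y \<in> carrier M"
  shows "mhom M (Aobj (colon a y)) (Aobj a) (lam y)"
  unfolding mhom_def Aobj_fst Aobj_act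
proof (intro conjI ballI)
  fix u assume "u \<in> emb ` colon a y"
  then obtain s where s: "s \<in> colon a y" "u = emb s" by blast
  show "lam y u \<in> emb ` a" unfolding lam_def using s y by (simp add: colon_def)
next
  fix u t assume "u \<in> emb ` colon a y" and t: "t \<in> carrier M"
  then obtain s where s: "s \<in> colon a y" "u = emb s" by blast
  have sM: "s \<in> carrier M" using s(1) by (simp add: colon_def)
  show "lam y (snd Mo u t) = snd Mo (lam y u) t"
    unfolding lam_def using s sM y t Mo_act by (simp add: m_assoc)
qed

end

context locB begin

lemma dense_carrier: "dense (carrier M)"
  unfolding dense_def Aobj_carrier
  using carrier_ri Rf_id[OF Mo_rmset] mhomD(1)[OF eta_hom[OF Mo_rmset] one_Mo] by blast

lemma dense_ri: "dense a \<Longrightarrow> right_ideal M a" unfolding dense_def by blast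

lemma dense_int:
  assumes da: "dense a" and db: "dense b"
  shows "dense (a \<inter> b)"
proof -
  have a: "right_ideal M a" and b: "right_ideal M b" using da db unfolding dense_def by blast+
  have ab: "right_ideal M (a \<inter> b)" using a b unfolding right_ideal_def by blast
  obtain va where va: "va \<in> fst (R (Aobj a))" "Rf (Aobj a) Mo (\<lambda>x. x) va = \<eta> Mo (emb \<one>)"
    using da unfolding dense_def by blast
  obtain vb where vb: "vb \<in> fst (R (Aobj b))" "Rf (Aobj b) Mo (\<lambda>x. x) vb = \<eta> Mo (emb \<one>)"
    using db unfolding dense_def by blast
  have sq: "pbsq M (Aobj (a \<inter> b)) (\<lambda>x. x) (\<lambda>x. x) (Aobj a) (Aobj b) Mo (\<lambda>x. x) (\<lambda>x. x)"
    unfolding pbsq_def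
  proof (intro conjI)
    show "rmset M (Aobj (a \<inter> b))" "rmset M (Aobj a)" "rmset M (Aobj b)" "rmset M Mo"
      using Aobj_rmset[OF ab] Aobj_rmset[OF a] Aobj_rmset[OF b] Mo_rmset .
    show "mhom M (Aobj (a \<inter> b)) (Aobj a) (\<lambda>x. x)" "mhom M (Aobj (a \<inter> b)) (Aobj b) (\<lambda>x. x)"
      using Aobj_incl[OF ab a] Aobj_incl[OF ab b] by blast+
    show "mhom M (Aobj a) Mo (\<lambda>x. x)" "mhom M (Aobj b) Mo (\<lambda>x. x)" using Aobj_Mo[OF a] Aobj_Mo[OF b] .
    show "\<forall>x\<in>fst (Aobj (a \<inter> b)). x = x" by simp
    show "\<forall>x\<in>fst (Aobj (a \<inter> b)). \<forall>x'\<in>fst (Aobj (a \<inter> b)). x = x' \<and> x = x' \<longrightarrow> x = x'" by simp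
    show "\<forall>u\<in>fst (Aobj a). \<forall>u'\<in>fst (Aobj b). u = u' \<longrightarrow> (\<exists>x\<in>fst (Aobj (a \<inter> b)). x = u \<and> x = u')"
    proof (intro ballI impI)
      fix u u' assume "u \<in> fst (Aobj a)" "u' \<in> fst (Aobj b)" "u = u'"
      then obtain s s' where s: "s \<in> a" "u = emb s" and s': "s' \<in> b" "u' = emb s'" and e: "emb s = emb s'"
        by (auto simp: Aobj_fst)
      have "s = s'" using inj_onD[OF emb_inj e] s(1) s'(1) ri_sub[OF a] ri_sub[OF b] by blast
      thus "\<exists>x\<in>fst (Aobj (a \<inter> b)). x = u \<and> x = u'" using s s' e by (auto simp: Aobj_fst)
    qed
  qed
  have sqR: "pbsq M (R (Aobj (a \<inter> b))) (Rf (Aobj (a \<inter> b)) (Aobj a) (\<lambda>x. x)) (Rf (Aobj (a \<inter> b)) (Aobj b) (\<lambda>x. x))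
     (R (Aobj a)) (R (Aobj b)) (R Mo) (Rf (Aobj a) Mo (\<lambda>x. x)) (Rf (Aobj b) Mo (\<lambda>x. x))"
    using pbR[OF sq] .
  then obtain v where v: "v \<in> fst (R (Aobj (a \<inter> b)))" "Rf (Aobj (a \<inter> b)) (Aobj a) (\<lambda>x. x) v = va"
    using va vb unfolding pbsq_def by (metis (no_types, lifting))
  have "Rf (Aobj (a \<inter> b)) Mo (\<lambda>x. x) v = Rf (Aobj a) Mo (\<lambda>x. x) (Rf (Aobj (a \<inter> b)) (Aobj a) (\<lambda>x. x) v)"
    using Rf_comp[OF Aobj_rmset[OF ab] Aobj_rmset[OF a] Mo_rmset Aobj_incl[OF ab a] Aobj_Mo[OF a] v(1)] by simp
  hence "Rf (Aobj (a \<inter> b)) Mo (\<lambda>x. x) v = \<eta> Mo (emb \<one>)" using v(2) va(2) by simp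
  thus ?thesis unfolding dense_def using ab v(1) by blast
qed

lemma dense_up:
  assumes da: "dense a" and b: "right_ideal M b" and ab: "a \<subseteq> b"
  shows "dense b"
proof -
  have a: "right_ideal M a" using da unfolding dense_def by blast
  obtain va where va: "va \<in> fst (R (Aobj a))" "Rf (Aobj a) Mo (\<lambda>x. x) va = \<eta> Mo (emb \<one>)"
    using da unfolding dense_def by blast
  have i: "mhom M (Aobj a) (Aobj b) (\<lambda>x. x)" using Aobj_incl[OF a b ab] .
  have "Rf (Aobj a) Mo (\<lambda>x. x) va = Rf (Aobj b) Mo (\<lambda>x. x) (Rf (Aobj a) (Aobj b) (\<lambda>x. x) va)"
    using Rf_comp[OF Aobj_rmset[OF a] Aobj_rmset[OF b] Mo_rmset i Aobj_Mo[OF b] va(1)] by simp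
  moreover have "Rf (Aobj a) (Aobj b) (\<lambda>x. x) va \<in> fst (R (Aobj b))"
    using mhomD(1)[OF Rf_hom[OF Aobj_rmset[OF a] Aobj_rmset[OF b] i] va(1)] .
  ultimately show ?thesis unfolding dense_def using b va(2) by metis
qed

lemma dense_colon:
  assumes da: "dense a" and y: "y \<in> carrier M"
  shows "dense (colon a y)"
proof -
  have a: "right_ideal M a" using da unfolding dense_def by blast
  have c: "right_ideal M (colon a y)" using colon_ri[OF a y] .
  obtain va where va: "va \<in> fst (R (Aobj a))" "Rf (Aobj a) Mo (\<lambda>x. x) va = \<eta> Mo (emb \<one>)"
    using da unfolding dense_def by blast
  have sq: "pbsq M (Aobj (colon a y)) (lam y) (\<lambda>x. x) (Aobj a) Mo Mo (\<lambda>x. x) (lam y)"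
    unfolding pbsq_def
  proof (intro conjI)
    show "rmset M (Aobj (colon a y))" "rmset M (Aobj a)" "rmset M Mo" "rmset M Mo"
      using Aobj_rmset[OF c] Aobj_rmset[OF a] Mo_rmset Mo_rmset .
    show "mhom M (Aobj (colon a y)) (Aobj a) (lam y)" using lam_colon[OF a y] .
    show "mhom M (Aobj (colon a y)) Mo (\<lambda>x. x)" using Aobj_Mo[OF c] .
    show "mhom M (Aobj a) Mo (\<lambda>x. x)" using Aobj_Mo[OF a] .
    show "mhom M Mo Mo (lam y)" using lam_Mo[OF y] .
    show "\<forall>x\<in>fst (Aobj (colon a y)). lam y x = lam y x" by simp
    show "\<forall>x\<in>fst (Aobj (colon a y)). \<forall>x'\<in>fst (Aobj (colon a y)). lam y x = lam y x' \<and> x = x' \<longrightarrow> x = x'" by simp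
    show "\<forall>u\<in>fst (Aobj a). \<forall>u'\<in>fst Mo. u = lam y u' \<longrightarrow> (\<exists>x\<in>fst (Aobj (colon a y)). lam y x = u \<and> x = u')"
    proof (intro ballI impI)
      fix u u' assume u: "u \<in> fst (Aobj a)" and u': "u' \<in> fst Mo" and e: "u = lam y u'"
      obtain s where s: "s \<in> a" "u = emb s" using u by (auto simp: Aobj_fst)
      obtain t where t: "t \<in> carrier M" "u' = emb t" using u' by (auto simp: Mo_fst)
      have "emb s = emb (y \<otimes> t)" using e s t unfolding lam_def by simp
      hence "s = y \<otimes> t" using inj_onD[OF emb_inj] s(1) ri_sub[OF a] y t(1) by blast
      hence "t \<in> colon a y" using s(1) t(1) unfolding colon_def by simp
      thus "\<exists>x\<in>fst (Aobj (colon a y)). lam y x = u \<and> x = u'" using e t by (auto simp: Aobj_fst)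
    qed
  qed
  have sqR: "pbsq M (R (Aobj (colon a y))) (Rf (Aobj (colon a y)) (Aobj a) (lam y)) (Rf (Aobj (colon a y)) Mo (\<lambda>x. x))
     (R (Aobj a)) (R Mo) (R Mo) (Rf (Aobj a) Mo (\<lambda>x. x)) (Rf Mo Mo (lam y))"
    using pbR[OF sq] .
  have e1: "\<eta> Mo (emb \<one>) \<in> fst (R Mo)" using mhomD(1)[OF eta_hom[OF Mo_rmset] one_Mo] .
  have vy: "snd (R (Aobj a)) va y \<in> fst (R (Aobj a))" using rmsetD(1)[OF R_rmset[OF Aobj_rmset[OF a]] va(1) y] .
  have "Rf (Aobj a) Mo (\<lambda>x. x) (snd (R (Aobj a)) va y) = snd (R Mo) (\<eta> Mo (emb \<one>)) y"
    using mhomD(2)[OF Rf_hom[OF Aobj_rmset[OF a] Mo_rmset Aobj_Mo[OF a]] va(1) y] va(2) by simp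
  also have "\<dots> = \<eta> Mo (emb y)"
    using mhomD(2)[OF eta_hom[OF Mo_rmset] one_Mo y] Mo_act[OF one_closed] y by simp
  also have "\<dots> = Rf Mo Mo (lam y) (\<eta> Mo (emb \<one>))"
    using Rf_eta[OF Mo_rmset Mo_rmset lam_Mo[OF y] one_Mo] y unfolding lam_def by simp
  finally have "Rf (Aobj a) Mo (\<lambda>x. x) (snd (R (Aobj a)) va y) = Rf Mo Mo (lam y) (\<eta> Mo (emb \<one>))" .
  then obtain v where v: "v \<in> fst (R (Aobj (colon a y)))" "Rf (Aobj (colon a y)) Mo (\<lambda>x. x) v = \<eta> Mo (emb \<one>)"
    using sqR vy e1 unfolding pbsq_def by (metis (no_types, lifting))
  thus ?thesis unfolding dense_def using c by blast
qed

end

lemma mhom_sub: "mhom M X Z g \<Longrightarrow> fst Z \<subseteq> fst Y \<Longrightarrow> snd Z = snd Y \<Longrightarrow> mhom M X Y g"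
  unfolding mhom_def by auto

context locB begin

lemma dense_T3:
  assumes db: "dense b" and c: "right_ideal M c" and dc: "\<And>y. y \<in> b \<Longrightarrow> dense (colon c y)"
  shows "dense c"
proof -
  have b: "right_ideal M b" using db unfolding dense_def by blast
  obtain vb where vb: "vb \<in> fst (R (Aobj b))" "Rf (Aobj b) Mo (\<lambda>x. x) vb = \<eta> Mo (emb \<one>)"
    using db unfolding dense_def by blast
  have Ac: "rmset M (Aobj c)" using Aobj_rmset[OF c] .
  have RAc: "rmset M (R (Aobj c))" using R_rmset[OF Ac] .
  let ?Ri = "Rf (Aobj c) Mo (\<lambda>x. x)"
  have Rih: "mhom M (R (Aobj c)) (R Mo) ?Ri" using Rf_hom[OF Ac Mo_rmset Aobj_Mo[OF c]] .
  have Riinj: "inj_on ?Ri (fst (R (Aobj c)))"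
    using R_mono[OF Ac Mo_rmset Aobj_Mo[OF c]] by (simp add: inj_on_def)
  define Z where "Z = (?Ri ` fst (R (Aobj c)), snd (R Mo))"
  have Zf: "fst Z = ?Ri ` fst (R (Aobj c))" and Za: "snd Z = snd (R Mo)" unfolding Z_def by simp_all
  have ZR: "fst Z \<subseteq> fst (R Mo)" unfolding Zf using mhomD(1)[OF Rih] by blast
  have f1: "mhom M (R (Aobj c)) Z ?Ri"
    unfolding mhom_def Zf Za using mhomD(2)[OF Rih] by blast
  have f2: "mhom M Z (R (Aobj c)) (inv_into (fst (R (Aobj c))) ?Ri)"
    unfolding mhom_def Zf Za
  proof (intro conjI ballI)
    fix z assume "z \<in> ?Ri ` fst (R (Aobj c))"
    thus "inv_into (fst (R (Aobj c))) ?Ri z \<in> fst (R (Aobj c))" by (rule inv_into_into)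
  next
    fix z s assume "z \<in> ?Ri ` fst (R (Aobj c))" and s: "s \<in> carrier M"
    then obtain w where w: "w \<in> fst (R (Aobj c))" "z = ?Ri w" by blast
    have ws: "snd (R (Aobj c)) w s \<in> fst (R (Aobj c))" using rmsetD(1)[OF RAc w(1) s] .
    have "snd (R Mo) z s = ?Ri (snd (R (Aobj c)) w s)" using mhomD(2)[OF Rih w(1) s] w(2) by simp
    thus "inv_into (fst (R (Aobj c))) ?Ri (snd (R Mo) z s) = snd (R (Aobj c)) (inv_into (fst (R (Aobj c))) ?Ri z) s"
      using inv_into_f_f[OF Riinj ws] inv_into_f_f[OF Riinj w(1)] w(2) by simp
  qed
  have iso: "miso M (R (Aobj c)) Z" unfolding miso_def
    using f1 f2 inv_into_f_f[OF Riinj] f_inv_into_f unfolding Zf by (metis (no_types, lifting))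
  have Zr: "rmset M Z" using miso_rmset[OF iso RAc monoid_axioms] .
  have ZL: "Z \<in> L" using frep iso Zr RL[OF Ac] unfolding full_replete_def by blast
  have inZ: "\<And>y. y \<in> b \<Longrightarrow> \<eta> Mo (emb y) \<in> fst Z"
  proof -
    fix y assume y: "y \<in> b"
    have yM: "y \<in> carrier M" using y ri_sub[OF b] by blast
    have cc: "right_ideal M (colon c y)" using colon_ri[OF c yM] .
    obtain v where v: "v \<in> fst (R (Aobj (colon c y)))" "Rf (Aobj (colon c y)) Mo (\<lambda>x. x) v = \<eta> Mo (emb \<one>)"
      using dc[OF y] unfolding dense_def by blast
    let ?w = "Rf (Aobj (colon c y)) (Aobj c) (lam y) v"
    have w: "?w \<in> fst (R (Aobj c))"
      using mhomD(1)[OF Rf_hom[OF Aobj_rmset[OF cc] Ac lam_colon[OF c yM]] v(1)] .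
    have "?Ri ?w = Rf (Aobj (colon c y)) Mo (lam y) v"
      using Rf_comp[OF Aobj_rmset[OF cc] Ac Mo_rmset lam_colon[OF c yM] Aobj_Mo[OF c] v(1)] by simp
    also have "\<dots> = Rf Mo Mo (lam y) (Rf (Aobj (colon c y)) Mo (\<lambda>x. x) v)"
      using Rf_comp[OF Aobj_rmset[OF cc] Mo_rmset Mo_rmset Aobj_Mo[OF cc] lam_Mo[OF yM] v(1)] by simp
    also have "\<dots> = \<eta> Mo (lam y (emb \<one>))" using v(2) Rf_eta[OF Mo_rmset Mo_rmset lam_Mo[OF yM] one_Mo] by simp
    also have "\<dots> = \<eta> Mo (emb y)" unfolding lam_def using yM by simp
    finally show "\<eta> Mo (emb y) \<in> fst Z" unfolding Zf using w by (metis image_eqI)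
  qed
  have Ab: "rmset M (Aobj b)" using Aobj_rmset[OF b] .
  have k: "mhom M (Aobj b) Z (\<eta> Mo)"
    unfolding mhom_def
  proof (intro conjI ballI)
    fix u assume "u \<in> fst (Aobj b)"
    then obtain y where "y \<in> b" "u = emb y" by (auto simp: Aobj_fst)
    thus "\<eta> Mo u \<in> fst Z" using inZ by simp
  next
    fix u s assume u: "u \<in> fst (Aobj b)" and s: "s \<in> carrier M"
    have "u \<in> fst Mo" using u ri_sub[OF b] by (auto simp: Aobj_fst Mo_fst)
    thus "\<eta> Mo (snd (Aobj b) u s) = snd Z (\<eta> Mo u) s"
      using mhomD(2)[OF eta_hom[OF Mo_rmset] _ s] by (simp add: Aobj_act Za)
  qed
  obtain g where g: "mhom M (R (Aobj b)) Z g" and ge: "\<forall>u\<in>fst (Aobj b). g (\<eta> (Aobj b) u) = \<eta> Mo u"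
    using refl_ext[OF refl Ab ZL k] by blast
  have g': "mhom M (R (Aobj b)) (R Mo) g" using mhom_sub[OF g ZR Za] .
  have "g vb = Rf (Aobj b) Mo (\<lambda>x. x) vb"
  proof (rule refl_uniq[OF refl Ab RL[OF Mo_rmset] g' Rf_hom[OF Ab Mo_rmset Aobj_Mo[OF b]] _ vb(1)])
    fix u assume u: "u \<in> fst (Aobj b)"
    show "g (\<eta> (Aobj b) u) = Rf (Aobj b) Mo (\<lambda>x. x) (\<eta> (Aobj b) u)"
      using ge u Rf_eta[OF Ab Mo_rmset Aobj_Mo[OF b] u] by simp
  qed
  hence "\<eta> Mo (emb \<one>) \<in> fst Z" using vb(2) mhomD(1)[OF g vb(1)] by simp
  hence "\<exists>w\<in>fst (R (Aobj c)). \<eta> Mo (emb \<one>) = ?Ri w" unfolding Zf by (simp add: image_iff)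
  thus "dense c" unfolding dense_def using c by (metis (no_types, lifting))
qed

definition m0 :: "'m set" where "m0 = \<Inter>{a. dense a}"

lemma dense_fin: "finite {a. dense a}"
proof (rule finite_subset[of _ "Pow (carrier M)"])
  show "{a. dense a} \<subseteq> Pow (carrier M)" using dense_ri ri_sub by blast
  show "finite (Pow (carrier M))" using fin by simp
qed

lemma dense_Inter: "finite F \<Longrightarrow> F \<noteq> {} \<Longrightarrow> F \<subseteq> {a. dense a} \<Longrightarrow> dense (\<Inter>F)"
proof (induction F rule: finite_ne_induct)
  case (singleton x) thus ?case by simp
next
  case (insert x F) thus ?case using dense_int by simp
qed

lemma dense_m0: "dense m0"
  unfolding m0_def using dense_Inter[OF dense_fin] dense_carrier by blast

lemma m0_min: "dense a \<Longrightarrow> m0 \<subseteq> a" unfolding m0_def by blast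

lemma m0_ri: "right_ideal M m0" using dense_ri[OF dense_m0] .

lemma m0_two: "two_sided_ideal M m0"
  unfolding two_sided_ideal_def
proof (intro conjI m0_ri ballI)
  fix x y assume x: "x \<in> m0" and y: "y \<in> carrier M"
  have "m0 \<subseteq> colon m0 y" using m0_min[OF dense_colon[OF dense_m0 y]] .
  thus "y \<otimes> x \<in> m0" using x unfolding colon_def by blast
qed

lemma m0_idem: "m0 = {x \<otimes> y | x y. x \<in> m0 \<and> y \<in> m0}"
proof -
  define m2 where "m2 = {x \<otimes> y | x y. x \<in> m0 \<and> y \<in> m0}"
  have sub: "m2 \<subseteq> m0" unfolding m2_def using ri_mult[OF m0_ri] ri_sub[OF m0_ri] by blast
  have ri2: "right_ideal M m2" unfolding right_ideal_def
  proof (intro conjI ballI)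
    show "m2 \<subseteq> carrier M" using sub ri_sub[OF m0_ri] by blast
  next
    fix z t assume "z \<in> m2" and t: "t \<in> carrier M"
    then obtain x y where xy: "x \<in> m0" "y \<in> m0" "z = x \<otimes> y" unfolding m2_def by blast
    have "z \<otimes> t = x \<otimes> (y \<otimes> t)" using xy t ri_sub[OF m0_ri] by (simp add: m_assoc subsetD)
    moreover have "y \<otimes> t \<in> m0" using ri_mult[OF m0_ri xy(2) t] .
    ultimately show "z \<otimes> t \<in> m2" unfolding m2_def using xy(1) by blast
  qed
  have "dense m2"
  proof (rule dense_T3[OF dense_m0 ri2])
    fix y assume y: "y \<in> m0"
    have yM: "y \<in> carrier M" using y ri_sub[OF m0_ri] by blast
    have "m0 \<subseteq> colon m2 y" unfolding colon_def m2_def using y ri_sub[OF m0_ri] by blast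
    thus "dense (colon m2 y)" using dense_up[OF dense_m0 colon_ri[OF ri2 yM]] by blast
  qed
  hence "m0 \<subseteq> m2" using m0_min by blast
  thus ?thesis using sub unfolding m2_def by blast
qed

end

context locB begin

sublocale I0: idm M m0
  by unfold_locales (rule m0_two, rule m0_idem)

lemma v0: "\<exists>v\<in>fst (R (Aobj m0)). Rf (Aobj m0) Mo (\<lambda>x. x) v = \<eta> Mo (emb \<one>)"
  using dense_m0 unfolding dense_def by blast

lemma L_sep:
  assumes BL: "B \<in> L"
  shows "msep M m0 B"
  unfolding msep_def
proof (intro ballI impI)
  fix x x' assume x: "x \<in> fst B" and x': "x' \<in> fst B" and eq: "\<forall>y\<in>m0. snd B x y = snd B x' y"
  have B: "rmset M B" using L_rmset[OF BL] .
  have A0: "rmset M (Aobj m0)" using Aobj_rmset[OF m0_ri] .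
  obtain v where v: "v \<in> fst (R (Aobj m0))" "Rf (Aobj m0) Mo (\<lambda>x. x) v = \<eta> Mo (emb \<one>)" using v0 by blast
  have ph: "mhom M Mo B (elt M emb B x)" "elt M emb B x (emb \<one>) = x"
    using elt_hom[OF monoid_axioms emb_inj B x] unfolding Mo_def by blast+
  have ph': "mhom M Mo B (elt M emb B x')" "elt M emb B x' (emb \<one>) = x'"
    using elt_hom[OF monoid_axioms emb_inj B x'] unfolding Mo_def by blast+
  obtain g where g: "mhom M (R Mo) B g" and ge: "\<forall>u\<in>fst Mo. g (\<eta> Mo u) = elt M emb B x u"
    using refl_ext[OF refl Mo_rmset BL ph(1)] by blast
  obtain g' where g': "mhom M (R Mo) B g'" and ge': "\<forall>u\<in>fst Mo. g' (\<eta> Mo u) = elt M emb B x' u"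
    using refl_ext[OF refl Mo_rmset BL ph'(1)] by blast
  let ?i = "Rf (Aobj m0) Mo (\<lambda>x. x)"
  have ih: "mhom M (R (Aobj m0)) (R Mo) ?i" using Rf_hom[OF A0 Mo_rmset Aobj_Mo[OF m0_ri]] .
  have "g (?i v) = g' (?i v)"
  proof (rule refl_uniq[OF refl A0 BL mhom_comp[OF ih g] mhom_comp[OF ih g'] _ v(1)])
    fix u assume u: "u \<in> fst (Aobj m0)"
    then obtain s where s: "s \<in> m0" "u = emb s" by (auto simp: Aobj_fst)
    have sM: "s \<in> carrier M" using s(1) ri_sub[OF m0_ri] by blast
    have uM: "u \<in> fst Mo" using s sM by (simp add: Mo_fst)
    have "?i (\<eta> (Aobj m0) u) = \<eta> Mo u" using Rf_eta[OF A0 Mo_rmset Aobj_Mo[OF m0_ri] u] by simp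
    moreover have "elt M emb B x u = elt M emb B x' u"
      using s sM eq unfolding elt_def by (simp add: inv_into_f_f[OF emb_inj sM])
    ultimately show "g (?i (\<eta> (Aobj m0) u)) = g' (?i (\<eta> (Aobj m0) u))" using ge ge' uM by simp
  qed
  thus "x = x'" using v(2) ge ge' one_Mo ph(2) ph'(2) by simp
qed

lemma L_ext:
  assumes BL: "B \<in> L"
  shows "mext M m0 B"
  unfolding mext_def
proof (intro allI impI)
  fix \<phi> assume ph: "mhom M (m0, mult M) B \<phi>"
  have B: "rmset M B" using L_rmset[OF BL] .
  have A0: "rmset M (Aobj m0)" using Aobj_rmset[OF m0_ri] .
  obtain v where v: "v \<in> fst (R (Aobj m0))" "Rf (Aobj m0) Mo (\<lambda>x. x) v = \<eta> Mo (emb \<one>)" using v0 by blast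
  have m0M: "\<And>s. s \<in> m0 \<Longrightarrow> s \<in> carrier M" using ri_sub[OF m0_ri] by blast
  have psi: "mhom M (Aobj m0) B (\<lambda>u. \<phi> (dec u))"
    unfolding mhom_def Aobj_fst Aobj_act
  proof (intro conjI ballI)
    fix u assume "u \<in> emb ` m0"
    then obtain s where s: "s \<in> m0" "u = emb s" by blast
    show "\<phi> (dec u) \<in> fst B" using s m0M mhomD(1)[OF ph] by simp
  next
    fix u t assume "u \<in> emb ` m0" and t: "t \<in> carrier M"
    then obtain s where s: "s \<in> m0" "u = emb s" by blast
    have "\<phi> (s \<otimes> t) = snd B (\<phi> s) t" using mhomD(2)[OF ph, of s t] s t by simp
    thus "\<phi> (dec (snd Mo u t)) = snd B (\<phi> (dec u)) t" using s m0M[OF s(1)] t Mo_act by simp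
  qed
  obtain g where g: "mhom M (R (Aobj m0)) B g" and ge: "\<forall>u\<in>fst (Aobj m0). g (\<eta> (Aobj m0) u) = \<phi> (dec u)"
    using refl_ext[OF refl A0 BL psi] by blast
  let ?i = "Rf (Aobj m0) Mo (\<lambda>x. x)"
  have ih: "mhom M (R (Aobj m0)) (R Mo) ?i" using Rf_hom[OF A0 Mo_rmset Aobj_Mo[OF m0_ri]] .
  have "\<forall>s\<in>m0. \<phi> s = snd B (g v) s"
  proof
    fix s assume s: "s \<in> m0"
    have sM: "s \<in> carrier M" using m0M[OF s] .
    have u: "emb s \<in> fst (Aobj m0)" using s by (simp add: Aobj_fst)
    have vs: "snd (R (Aobj m0)) v s \<in> fst (R (Aobj m0))" using rmsetD(1)[OF R_rmset[OF A0] v(1) sM] .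
    have es: "\<eta> (Aobj m0) (emb s) \<in> fst (R (Aobj m0))" using mhomD(1)[OF eta_hom[OF A0] u] .
    have "?i (snd (R (Aobj m0)) v s) = snd (R Mo) (\<eta> Mo (emb \<one>)) s"
      using mhomD(2)[OF ih v(1) sM] v(2) by simp
    also have "\<dots> = \<eta> Mo (emb s)"
      using mhomD(2)[OF eta_hom[OF Mo_rmset] one_Mo sM] Mo_act[OF one_closed] sM by simp
    also have "\<dots> = ?i (\<eta> (Aobj m0) (emb s))" using Rf_eta[OF A0 Mo_rmset Aobj_Mo[OF m0_ri] u] by simp
    finally have "snd (R (Aobj m0)) v s = \<eta> (Aobj m0) (emb s)"
      using R_mono[OF A0 Mo_rmset Aobj_Mo[OF m0_ri] _ vs es] by (simp add: inj_on_def)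
    hence "snd B (g v) s = g (\<eta> (Aobj m0) (emb s))" using mhomD(2)[OF g v(1) sM] by simp
    also have "\<dots> = \<phi> s" using ge u sM by simp
    finally show "\<phi> s = snd B (g v) s" by simp
  qed
  thus "\<exists>x\<in>fst B. \<forall>y\<in>m0. \<phi> y = snd B x y" using mhomD(1)[OF g v(1)] by blast
qed

lemma L_sheaf: "B \<in> L \<Longrightarrow> is_sheaf M (topF M m0) B"
  using I0.sheaf_char L_rmset L_sep L_ext by blast

end

context locB begin

definition Xp :: "('u,'m) mobj \<Rightarrow> ('u \<times> 'u,'m) mobj" where
  "Xp X = (fst X \<times> fst X, \<lambda>p s. (snd X (fst p) s, snd X (snd p) s))"

definition PX :: "('u,'m) mobj \<Rightarrow> ('u,'m) mobj" where "PX X = tr pr (Xp X)"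

definition pi1 :: "'u \<Rightarrow> 'u" where "pi1 u = fst (inv_into UNIV pr u)"
definition pi2 :: "'u \<Rightarrow> 'u" where "pi2 u = snd (inv_into UNIV pr u)"

lemma pi1_pr[simp]: "pi1 (pr p) = fst p" unfolding pi1_def using pr_inj by simp
lemma pi2_pr[simp]: "pi2 (pr p) = snd p" unfolding pi2_def using pr_inj by simp

lemma pr_inj_on: "inj_on pr A" by (rule inj_on_subset[OF pr_inj subset_UNIV])

lemma Xp_rmset:
  assumes X: "rmset M X" shows "rmset M (Xp X)"
  unfolding rmset_def
proof (intro conjI ballI)
  fix p s assume "p \<in> fst (Xp X)" "s \<in> carrier M"
  thus "snd (Xp X) p s \<in> fst (Xp X)" unfolding Xp_def using rmsetD(1)[OF X] by (cases p) simp
next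
  fix p assume "p \<in> fst (Xp X)"
  thus "snd (Xp X) p \<one> = p" unfolding Xp_def using rmsetD(2)[OF X] by (cases p) simp
next
  fix p s t assume "p \<in> fst (Xp X)" "s \<in> carrier M" "t \<in> carrier M"
  thus "snd (Xp X) p (s \<otimes> t) = snd (Xp X) (snd (Xp X) p s) t"
    unfolding Xp_def using rmsetD(3)[OF X] by (cases p) simp
qed

lemma PX_rmset: "rmset M X \<Longrightarrow> rmset M (PX X)"
  unfolding PX_def by (rule tr_rmset[OF pr_inj_on Xp_rmset monoid_axioms])

lemma PX_fst: "fst (PX X) = pr ` (fst X \<times> fst X)" by (simp add: PX_def Xp_def)

lemma PX_act: "a \<in> fst X \<Longrightarrow> b \<in> fst X \<Longrightarrow> snd (PX X) (pr (a, b)) s = pr (snd X a s, snd X b s)"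
proof -
  assume ab: "a \<in> fst X" "b \<in> fst X"
  have "(a, b) \<in> fst (Xp X)" using ab by (simp add: Xp_def)
  from tr_act[OF pr_inj_on this, of s]
  have "snd (tr pr (Xp X)) (pr (a, b)) s = pr (snd (Xp X) (a, b) s)" .
  thus ?thesis unfolding PX_def by (simp add: Xp_def)
qed

lemma eta_inj:
  assumes sh: "is_sheaf M (topF M m0) X" and x: "x \<in> fst X" and x': "x' \<in> fst X"
    and eq: "\<eta> X x = \<eta> X x'"
  shows "x = x'"
proof -
  have X: "rmset M X" and sep: "msep M m0 X" using sh I0.sheaf_char by blast+
  have PXr: "rmset M (PX X)" using PX_rmset[OF X] .
  define c0 where "c0 = emb \<one>"
  define T1 :: "('u,'m) mobj" where "T1 = ({c0}, \<lambda>_ _. c0)"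
  have T1r: "rmset M T1" unfolding T1_def rmset_def by simp
  have cT: "mhom M X T1 (\<lambda>_. c0)" unfolding T1_def mhom_def by simp
  have p1h: "mhom M (PX X) X pi1"
    unfolding mhom_def PX_fst
  proof (intro conjI ballI)
    fix u assume "u \<in> pr ` (fst X \<times> fst X)" thus "pi1 u \<in> fst X" by auto
  next
    fix u s assume "u \<in> pr ` (fst X \<times> fst X)" "s \<in> carrier M"
    then obtain a b where ab: "a \<in> fst X" "b \<in> fst X" "u = pr (a, b)" by blast
    show "pi1 (snd (PX X) u s) = snd X (pi1 u) s" using PX_act[OF ab(1,2), of s] ab(3) by simp
  qed
  have pi2h: "mhom M (PX X) X pi2"
    unfolding mhom_def PX_fst
  proof (intro conjI ballI)
    fix u assume "u \<in> pr ` (fst X \<times> fst X)" thus "pi2 u \<in> fst X" by auto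
  next
    fix u s assume "u \<in> pr ` (fst X \<times> fst X)" "s \<in> carrier M"
    then obtain a b where ab: "a \<in> fst X" "b \<in> fst X" "u = pr (a, b)" by blast
    show "pi2 (snd (PX X) u s) = snd X (pi2 u) s" using PX_act[OF ab(1,2), of s] ab(3) by simp
  qed
  have sq1: "pbsq M (PX X) pi1 pi2 X X T1 (\<lambda>_. c0) (\<lambda>_. c0)"
    unfolding pbsq_def
  proof (intro conjI PXr X T1r p1h pi2h cT)
    show "\<forall>u\<in>fst (PX X). c0 = c0" by simp
    show "\<forall>u\<in>fst (PX X). \<forall>u'\<in>fst (PX X). pi1 u = pi1 u' \<and> pi2 u = pi2 u' \<longrightarrow> u = u'"
      unfolding PX_fst by (auto simp: prod_eq_iff)
    show "\<forall>a\<in>fst X. \<forall>b\<in>fst X. c0 = c0 \<longrightarrow> (\<exists>u\<in>fst (PX X). pi1 u = a \<and> pi2 u = b)"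
      unfolding PX_fst by force
  qed
  have jinj: "\<And>w w'. w \<in> fst (R (PX X)) \<Longrightarrow> w' \<in> fst (R (PX X)) \<Longrightarrow> Rf (PX X) X pi1 w = Rf (PX X) X pi1 w'
      \<Longrightarrow> Rf (PX X) X pi2 w = Rf (PX X) X pi2 w' \<Longrightarrow> w = w'"
    using pbR[OF sq1] unfolding pbsq_def by blast
  define a where "a = {s \<in> carrier M. snd X x s = snd X x' s}"
  have aM: "a \<subseteq> carrier M" unfolding a_def by blast
  have ar: "right_ideal M a" unfolding right_ideal_def a_def
    using rmsetD(3)[OF X x] rmsetD(3)[OF X x'] by auto
  define q2 where "q2 u = snd X x (dec u)" for u
  define f where "f u = pr (snd X x (dec u), snd X x' (dec u))" for u
  define g where "g y = pr (y, y)" for y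
  have q2h: "mhom M (Aobj a) X q2"
    unfolding mhom_def Aobj_fst Aobj_act
  proof (intro conjI ballI)
    fix u assume "u \<in> emb ` a"
    then obtain s where s: "s \<in> a" "u = emb s" by blast
    show "q2 u \<in> fst X" unfolding q2_def using s aM rmsetD(1)[OF X x] by auto
  next
    fix u t assume "u \<in> emb ` a" and t: "t \<in> carrier M"
    then obtain s where s: "s \<in> a" "u = emb s" by blast
    have sM: "s \<in> carrier M" using s aM by blast
    show "q2 (snd Mo u t) = snd X (q2 u) t" unfolding q2_def
      using s sM t Mo_act rmsetD(3)[OF X x sM t] by simp
  qed
  have fh: "mhom M Mo (PX X) f"
    unfolding mhom_def
  proof (intro conjI ballI)
    fix u assume "u \<in> fst Mo"
    then obtain s where s: "s \<in> carrier M" "u = emb s" by (auto simp: Mo_fst)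
    have d: "dec u = s" using s by simp
    show "f u \<in> fst (PX X)" unfolding f_def d PX_fst
      using rmsetD(1)[OF X x s(1)] rmsetD(1)[OF X x' s(1)] by blast
  next
    fix u t assume "u \<in> fst Mo" and t: "t \<in> carrier M"
    then obtain s where s: "s \<in> carrier M" "u = emb s" by (auto simp: Mo_fst)
    have d: "dec u = s" using s by simp
    have st: "s \<otimes> t \<in> carrier M" using s(1) t by simp
    have d2: "dec (snd Mo u t) = s \<otimes> t" using s Mo_act st by simp
    have "snd (PX X) (f u) t = pr (snd X (snd X x s) t, snd X (snd X x' s) t)"
      unfolding f_def d using PX_act[OF rmsetD(1)[OF X x s(1)] rmsetD(1)[OF X x' s(1)]] .
    also have "\<dots> = f (snd Mo u t)" unfolding f_def d2
      using rmsetD(3)[OF X x s(1) t] rmsetD(3)[OF X x' s(1) t] by simp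
    finally show "f (snd Mo u t) = snd (PX X) (f u) t" by simp
  qed
  have gh: "mhom M X (PX X) g"
    unfolding mhom_def
  proof (intro conjI ballI)
    fix y assume "y \<in> fst X" thus "g y \<in> fst (PX X)" unfolding g_def PX_fst by blast
  next
    fix y t assume y: "y \<in> fst X" and t: "t \<in> carrier M"
    show "g (snd X y t) = snd (PX X) (g y) t" unfolding g_def using PX_act[OF y y] by simp
  qed
  have sq2: "pbsq M (Aobj a) (\<lambda>u. u) q2 Mo X (PX X) f g"
    unfolding pbsq_def
  proof (intro conjI Aobj_rmset[OF ar] Mo_rmset X PXr Aobj_Mo[OF ar] q2h fh gh)
    show "\<forall>u\<in>fst (Aobj a). f u = g (q2 u)"
    proof
      fix u assume "u \<in> fst (Aobj a)"
      then obtain s where s: "s \<in> a" "u = emb s" by (auto simp: Aobj_fst)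
      have sM: "s \<in> carrier M" using s(1) aM by blast
      have "snd X x s = snd X x' s" using s(1) unfolding a_def by blast
      thus "f u = g (q2 u)" unfolding f_def g_def q2_def using s(2) sM by simp
    qed
    show "\<forall>u\<in>fst (Aobj a). \<forall>u'\<in>fst (Aobj a). u = u' \<and> q2 u = q2 u' \<longrightarrow> u = u'" by simp
    show "\<forall>u\<in>fst Mo. \<forall>y\<in>fst X. f u = g y \<longrightarrow> (\<exists>v\<in>fst (Aobj a). v = u \<and> q2 v = y)"
    proof (intro ballI impI)
      fix u y assume u: "u \<in> fst Mo" and y: "y \<in> fst X" and e: "f u = g y"
      obtain s where s: "s \<in> carrier M" "u = emb s" using u by (auto simp: Mo_fst)
      have d: "dec u = s" using s by simp
      have "(snd X x s, snd X x' s) = (y, y)" using injD[OF pr_inj e[unfolded f_def g_def d]] .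
      hence xy: "snd X x s = y" "snd X x' s = y" by simp_all
      hence "s \<in> a" using s unfolding a_def by simp
      hence "u \<in> fst (Aobj a)" using s(2) by (simp add: Aobj_fst)
      moreover have "q2 u = y" unfolding q2_def d using xy by simp
      ultimately show "\<exists>v\<in>fst (Aobj a). v = u \<and> q2 v = y" by blast
    qed
  qed
  have xin: "pr (x, x') \<in> fst (PX X)" "pr (x, x) \<in> fst (PX X)" using x x' by (auto simp: PX_fst)
  have e1: "\<eta> (PX X) (pr (x, x')) = \<eta> (PX X) (pr (x, x))"
  proof (rule jinj)
    show "\<eta> (PX X) (pr (x, x')) \<in> fst (R (PX X))" "\<eta> (PX X) (pr (x, x)) \<in> fst (R (PX X))"
      using mhomD(1)[OF eta_hom[OF PXr]] xin by blast+
    show "Rf (PX X) X pi1 (\<eta> (PX X) (pr (x, x'))) = Rf (PX X) X pi1 (\<eta> (PX X) (pr (x, x)))"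
      using Rf_eta[OF PXr X p1h] xin by simp
    show "Rf (PX X) X pi2 (\<eta> (PX X) (pr (x, x'))) = Rf (PX X) X pi2 (\<eta> (PX X) (pr (x, x)))"
      using Rf_eta[OF PXr X pi2h] xin eq by simp
  qed
  have a0: "\<eta> Mo (emb \<one>) \<in> fst (R Mo)" using mhomD(1)[OF eta_hom[OF Mo_rmset] one_Mo] .
  have b0: "\<eta> X x \<in> fst (R X)" using mhomD(1)[OF eta_hom[OF X] x] .
  have "Rf Mo (PX X) f (\<eta> Mo (emb \<one>)) = \<eta> (PX X) (pr (x, x'))"
    using Rf_eta[OF Mo_rmset PXr fh one_Mo] rmsetD(2)[OF X] x x' unfolding f_def by simp
  moreover have "Rf X (PX X) g (\<eta> X x) = \<eta> (PX X) (pr (x, x))"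
    using Rf_eta[OF X PXr gh x] unfolding g_def by simp
  ultimately have "Rf Mo (PX X) f (\<eta> Mo (emb \<one>)) = Rf X (PX X) g (\<eta> X x)" using e1 by simp
  then obtain v where v: "v \<in> fst (R (Aobj a))" "Rf (Aobj a) Mo (\<lambda>u. u) v = \<eta> Mo (emb \<one>)"
    using pbR[OF sq2] a0 b0 unfolding pbsq_def by (metis (no_types, lifting))
  have "dense a" unfolding dense_def using ar v by blast
  hence "m0 \<subseteq> a" using m0_min by blast
  hence "\<forall>s\<in>m0. snd X x s = snd X x' s" unfolding a_def by blast
  thus "x = x'" using sep x x' unfolding msep_def by blast
qed

end

context locB begin

lemma eta_surj:
  assumes sh: "is_sheaf M (topF M m0) X" and z: "z \<in> fst (R X)"
  shows "\<exists>x\<in>fst X. \<eta> X x = z"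
proof -
  have X: "rmset M X" and ext: "mext M m0 X" using sh I0.sheaf_char by blast+
  have RX: "rmset M (R X)" using R_rmset[OF X] .
  have eh: "mhom M X (R X) (\<eta> X)" using eta_hom[OF X] .
  have einj: "inj_on (\<eta> X) (fst X)" using eta_inj[OF sh] by (simp add: inj_on_def)
  define a where "a = {s \<in> carrier M. snd (R X) z s \<in> \<eta> X ` fst X}"
  have aM: "a \<subseteq> carrier M" unfolding a_def by blast
  have ar: "right_ideal M a" unfolding right_ideal_def
  proof (intro conjI aM ballI)
    fix s t assume s: "s \<in> a" and t: "t \<in> carrier M"
    have sM: "s \<in> carrier M" using s aM by blast
    obtain x0 where x0: "x0 \<in> fst X" "snd (R X) z s = \<eta> X x0" using s unfolding a_def by blast
    have "snd (R X) z (s \<otimes> t) = \<eta> X (snd X x0 t)"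
      using rmsetD(3)[OF RX z sM t] x0 mhomD(2)[OF eh x0(1) t] by simp
    moreover have "snd X x0 t \<in> fst X" using rmsetD(1)[OF X x0(1) t] .
    ultimately show "s \<otimes> t \<in> a" unfolding a_def using sM t by blast
  qed
  define \<zeta> where "\<zeta> = elt M emb (R X) z"
  have zh: "mhom M Mo (R X) \<zeta>" and z1: "\<zeta> (emb \<one>) = z"
    using elt_hom[OF monoid_axioms emb_inj RX z] unfolding \<zeta>_def Mo_def by blast+
  have zs: "\<And>s. s \<in> carrier M \<Longrightarrow> \<zeta> (emb s) = snd (R X) z s"
    unfolding \<zeta>_def elt_def using emb_inj by (simp add: inv_into_f_f)
  define q2 where "q2 u = inv_into (fst X) (\<eta> X) (\<zeta> u)" for u
  have q2v: "\<And>s. s \<in> a \<Longrightarrow> q2 (emb s) \<in> fst X \<and> \<eta> X (q2 (emb s)) = snd (R X) z s"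
  proof -
    fix s assume s: "s \<in> a"
    have sM: "s \<in> carrier M" using s aM by blast
    have "\<zeta> (emb s) \<in> \<eta> X ` fst X" using s zs[OF sM] unfolding a_def by simp
    thus "q2 (emb s) \<in> fst X \<and> \<eta> X (q2 (emb s)) = snd (R X) z s"
      unfolding q2_def using zs[OF sM] by (simp add: inv_into_into f_inv_into_f)
  qed
  have q2h: "mhom M (Aobj a) X q2"
    unfolding mhom_def
  proof (intro conjI ballI)
    fix u assume "u \<in> fst (Aobj a)"
    then obtain s where "s \<in> a" "u = emb s" by (auto simp: Aobj_fst)
    thus "q2 u \<in> fst X" using q2v by blast
  next
    fix u t assume "u \<in> fst (Aobj a)" and t: "t \<in> carrier M"
    then obtain s where s: "s \<in> a" "u = emb s" by (auto simp: Aobj_fst)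
    have sM: "s \<in> carrier M" using s aM by blast
    have st: "s \<otimes> t \<in> a" using ar s(1) t unfolding right_ideal_def by blast
    have u2: "snd (Aobj a) u t = emb (s \<otimes> t)" using s(2) Mo_act[OF sM] by (simp add: Aobj_act)
    have A: "q2 (emb (s \<otimes> t)) \<in> fst X" "snd X (q2 (emb s)) t \<in> fst X"
      using q2v[OF st] rmsetD(1)[OF X] q2v[OF s(1)] t by blast+
    have "\<eta> X (q2 (emb (s \<otimes> t))) = snd (R X) z (s \<otimes> t)" using q2v[OF st] by blast
    also have "\<dots> = snd (R X) (\<eta> X (q2 (emb s))) t" using rmsetD(3)[OF RX z sM t] q2v[OF s(1)] by simp
    also have "\<dots> = \<eta> X (snd X (q2 (emb s)) t)" using mhomD(2)[OF eh _ t] q2v[OF s(1)] by simp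
    finally have "q2 (emb (s \<otimes> t)) = snd X (q2 (emb s)) t" using inj_onD[OF einj _ A] by blast
    thus "q2 (snd (Aobj a) u t) = snd X (q2 u) t" using u2 s(2) by simp
  qed
  have sq: "pbsq M (Aobj a) (\<lambda>u. u) q2 Mo X (R X) \<zeta> (\<eta> X)"
    unfolding pbsq_def
  proof (intro conjI Aobj_rmset[OF ar] Mo_rmset X RX Aobj_Mo[OF ar] q2h zh eh)
    show "\<forall>u\<in>fst (Aobj a). \<zeta> u = \<eta> X (q2 u)"
    proof
      fix u assume "u \<in> fst (Aobj a)"
      then obtain s where s: "s \<in> a" "u = emb s" by (auto simp: Aobj_fst)
      have sM: "s \<in> carrier M" using s aM by blast
      show "\<zeta> u = \<eta> X (q2 u)" using q2v[OF s(1)] zs[OF sM] s(2) by simp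
    qed
    show "\<forall>u\<in>fst (Aobj a). \<forall>u'\<in>fst (Aobj a). u = u' \<and> q2 u = q2 u' \<longrightarrow> u = u'" by simp
    show "\<forall>u\<in>fst Mo. \<forall>y\<in>fst X. \<zeta> u = \<eta> X y \<longrightarrow> (\<exists>v\<in>fst (Aobj a). v = u \<and> q2 v = y)"
    proof (intro ballI impI)
      fix u y assume u: "u \<in> fst Mo" and y: "y \<in> fst X" and e: "\<zeta> u = \<eta> X y"
      obtain s where s: "s \<in> carrier M" "u = emb s" using u by (auto simp: Mo_fst)
      have sa: "s \<in> a" unfolding a_def using s e zs[OF s(1)] y by auto
      have "\<eta> X (q2 (emb s)) = \<eta> X y" using q2v[OF sa] zs[OF s(1)] e s(2) by simp
      hence "q2 u = y" using inj_onD[OF einj _ _ y] q2v[OF sa] s(2) by blast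
      moreover have "u \<in> fst (Aobj a)" using sa s(2) by (simp add: Aobj_fst)
      ultimately show "\<exists>v\<in>fst (Aobj a). v = u \<and> q2 v = y" by blast
    qed
  qed
  have a0: "\<eta> Mo (emb \<one>) \<in> fst (R Mo)" using mhomD(1)[OF eta_hom[OF Mo_rmset] one_Mo] .
  have "Rf Mo (R X) \<zeta> (\<eta> Mo (emb \<one>)) = \<eta> (R X) z" using Rf_eta[OF Mo_rmset RX zh one_Mo] z1 by simp
  moreover have "Rf X (R X) (\<eta> X) z = \<eta> (R X) z" using Rf_eta_eq[OF X z] .
  ultimately have "Rf Mo (R X) \<zeta> (\<eta> Mo (emb \<one>)) = Rf X (R X) (\<eta> X) z" by simp
  then obtain v where v: "v \<in> fst (R (Aobj a))" "Rf (Aobj a) Mo (\<lambda>u. u) v = \<eta> Mo (emb \<one>)"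
    using pbR[OF sq] a0 z unfolding pbsq_def by (metis (no_types, lifting))
  have "dense a" unfolding dense_def using ar v by blast
  hence m0a: "m0 \<subseteq> a" using m0_min by blast
  have m0M: "m0 \<subseteq> carrier M" using ri_sub[OF m0_ri] .
  define \<psi> where "\<psi> s = q2 (emb s)" for s
  have ph: "mhom M (m0, mult M) X \<psi>"
    unfolding mhom_def
  proof (intro conjI ballI)
    fix s assume "s \<in> fst (m0, mult M)"
    thus "\<psi> s \<in> fst X" unfolding \<psi>_def using q2v m0a by auto
  next
    fix s t assume s: "s \<in> fst (m0, mult M)" and t: "t \<in> carrier M"
    have sa: "s \<in> a" using s m0a by auto
    have sM: "s \<in> carrier M" using sa aM by blast
    have "q2 (snd (Aobj a) (emb s) t) = snd X (q2 (emb s)) t"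
      using mhomD(2)[OF q2h _ t] sa by (simp add: Aobj_fst)
    thus "\<psi> (snd (m0, mult M) s t) = snd X (\<psi> s) t" unfolding \<psi>_def using Mo_act[OF sM] by (simp add: Aobj_act)
  qed
  obtain x0 where x0: "x0 \<in> fst X" and hx: "\<forall>s\<in>m0. \<psi> s = snd X x0 s"
    using ext ph unfolding mext_def by blast
  have "\<eta> X x0 = z"
  proof -
    have "msep M m0 (R X)" using L_sep[OF RL[OF X]] .
    moreover have "\<forall>s\<in>m0. snd (R X) (\<eta> X x0) s = snd (R X) z s"
    proof
      fix s assume s: "s \<in> m0"
      have sM: "s \<in> carrier M" using s m0M by blast
      have "snd (R X) (\<eta> X x0) s = \<eta> X (snd X x0 s)" using mhomD(2)[OF eh x0 sM] by simp
      also have "\<dots> = \<eta> X (\<psi> s)" using hx s by simp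
      also have "\<dots> = snd (R X) z s" unfolding \<psi>_def using q2v m0a s by blast
      finally show "snd (R X) (\<eta> X x0) s = snd (R X) z s" .
    qed
    ultimately show ?thesis using mhomD(1)[OF eh x0] z unfolding msep_def by blast
  qed
  thus ?thesis using x0 by blast
qed

lemma sheaf_in_L:
  assumes sh: "is_sheaf M (topF M m0) X"
  shows "X \<in> L"
proof -
  have X: "rmset M X" using sh I0.sheaf_char by blast
  have eh: "mhom M X (R X) (\<eta> X)" using eta_hom[OF X] .
  have einj: "inj_on (\<eta> X) (fst X)" using eta_inj[OF sh] by (simp add: inj_on_def)
  have im: "\<eta> X ` fst X = fst (R X)" using eta_surj[OF sh] mhomD(1)[OF eh] by blast
  have gh: "mhom M (R X) X (inv_into (fst X) (\<eta> X))"
    unfolding mhom_def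
  proof (intro conjI ballI)
    fix w assume "w \<in> fst (R X)"
    thus "inv_into (fst X) (\<eta> X) w \<in> fst X" using im by (metis inv_into_into)
  next
    fix w s assume w: "w \<in> fst (R X)" and s: "s \<in> carrier M"
    obtain x where x: "x \<in> fst X" "w = \<eta> X x" using w im by blast
    have xs: "snd X x s \<in> fst X" using rmsetD(1)[OF X x(1) s] .
    show "inv_into (fst X) (\<eta> X) (snd (R X) w s) = snd X (inv_into (fst X) (\<eta> X) w) s"
      using x mhomD(2)[OF eh x(1) s] inv_into_f_f[OF einj xs] inv_into_f_f[OF einj x(1)] by simp
  qed
  have iso: "miso M (R X) X" unfolding miso_def
  proof (intro exI conjI)
    show "mhom M (R X) X (inv_into (fst X) (\<eta> X))" using gh .
    show "mhom M X (R X) (\<eta> X)" using eh .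
    show "\<forall>x\<in>fst (R X). \<eta> X (inv_into (fst X) (\<eta> X) x) = x" using im f_inv_into_f by metis
    show "\<forall>y\<in>fst X. inv_into (fst X) (\<eta> X) (\<eta> X y) = y" using inv_into_f_f[OF einj] by blast
  qed
  show ?thesis using frep RL[OF X] X iso unfolding full_replete_def by blast
qed

theorem L_eq: "L = Sh M (topF M m0)"
  unfolding Sh_def using L_sheaf sheaf_in_L by blast

theorem L_idem: "m0 \<in> idem_ideals M \<and> L = Sh M (topF M m0)"
  unfolding idem_ideals_def using m0_two m0_idem L_eq by blast

end

definition Rees :: "('m,'b) monoid_scheme \<Rightarrow> 'm set \<Rightarrow> ('m option,'m) mobj" where
  "Rees M J = (Some ` (carrier M - J) \<union> {None},
     \<lambda>w s. (case w of None \<Rightarrow> None | Some x \<Rightarrow> if x \<otimes>\<^bsub>M\<^esub> s \<in> J then None else Some (x \<otimes>\<^bsub>M\<^esub> s)))"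

lemma Rees_act_None: "snd (Rees M J) None s = None" by (simp add: Rees_def)
lemma Rees_act_Some: "snd (Rees M J) (Some x) s = (if x \<otimes>\<^bsub>M\<^esub> s \<in> J then None else Some (x \<otimes>\<^bsub>M\<^esub> s))"
  by (simp add: Rees_def)

lemma Rees_rmset:
  assumes M: "monoid M" and J: "right_ideal M J"
  shows "rmset M (Rees M J)"
proof -
  interpret monoid M by fact
  have Jr: "\<And>x s. x \<in> J \<Longrightarrow> s \<in> carrier M \<Longrightarrow> x \<otimes>\<^bsub>M\<^esub> s \<in> J" using J unfolding right_ideal_def by blast
  show ?thesis unfolding rmset_def
  proof (intro conjI ballI)
    fix w s assume wo: "w \<in> fst (Rees M J)" and s: "s \<in> carrier M"
    show "snd (Rees M J) w s \<in> fst (Rees M J)"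
    proof (cases w)
      case None thus ?thesis by (simp add: Rees_def)
    next
      case (Some x) thus ?thesis using wo s by (auto simp: Rees_def)
    qed
  next
    fix w assume wo: "w \<in> fst (Rees M J)"
    show "snd (Rees M J) w \<one>\<^bsub>M\<^esub> = w"
    proof (cases w)
      case None thus ?thesis by (simp add: Rees_def)
    next
      case (Some x) thus ?thesis using wo by (auto simp: Rees_def)
    qed
  next
    fix w s t assume wo: "w \<in> fst (Rees M J)" and s: "s \<in> carrier M" and t: "t \<in> carrier M"
    show "snd (Rees M J) w (s \<otimes>\<^bsub>M\<^esub> t) = snd (Rees M J) (snd (Rees M J) w s) t"
    proof (cases w)
      case None thus ?thesis by (simp add: Rees_def)
    next
      case (Some x)
      hence x: "x \<in> carrier M" using wo by (auto simp: Rees_def)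
      show ?thesis
      proof (cases "x \<otimes>\<^bsub>M\<^esub> s \<in> J")
        case True
        hence "x \<otimes>\<^bsub>M\<^esub> (s \<otimes>\<^bsub>M\<^esub> t) \<in> J" using Jr[OF True t] x s t by (simp add: m_assoc)
        thus ?thesis using True Some by (simp add: Rees_def)
      next
        case False
        thus ?thesis using Some x s t by (simp add: Rees_def m_assoc)
      qed
    qed
  qed
qed

lemma Rees_fin: "finite (carrier M) \<Longrightarrow> finite (fst (Rees M J))"
  by (simp add: Rees_def)

context idmu begin

lemma ee_act: "rmset M A \<Longrightarrow> x \<in> fst A \<Longrightarrow> s \<in> carrier M \<Longrightarrow> snd (RR A) (ee A x) s = ee A (snd A x s)"
  using mhomD(2)[OF ee_hom] by metis

lemma Sh_sub:
  fixes J :: "'m set" and f :: "'m option \<Rightarrow> 'u"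
  assumes J: "right_ideal M J" and f: "inj_on f (fst (Rees M J))"
    and hyp: "\<And>X::('u,'m) mobj. is_sheaf M (topF M I) X \<Longrightarrow> is_sheaf M (topF M J) X"
  shows "I \<subseteq> J"
proof (cases "\<one> \<in> J")
  case True
  have "carrier M \<subseteq> J"
  proof
    fix x assume "x \<in> carrier M"
    hence "\<one> \<otimes> x \<in> J" using True J unfolding right_ideal_def by blast
    thus "x \<in> J" using \<open>x \<in> carrier M\<close> by simp
  qed
  thus ?thesis using I_sub by blast
next
  case False
  define T0 where "T0 = tr f (Rees M J)"
  have Rr: "rmset M (Rees M J)" using Rees_rmset[OF monoid_axioms J] .
  have T0r: "rmset M T0" unfolding T0_def using tr_rmset[OF f Rr monoid_axioms] .
  have S1: "Some \<one> \<in> fst (Rees M J)" using False by (simp add: Rees_def)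
  have N: "None \<in> fst (Rees M J)" by (simp add: Rees_def)
  define q0 where "q0 = f (Some \<one>)"
  define z0 where "z0 = f None"
  have q0T: "q0 \<in> fst T0" and z0T: "z0 \<in> fst T0" unfolding T0_def q0_def z0_def using S1 N by simp_all
  have actq: "\<And>s. s \<in> carrier M \<Longrightarrow> snd T0 q0 s = f (if s \<in> J then None else Some s)"
  proof -
    fix s assume s: "s \<in> carrier M"
    have "snd T0 q0 s = f (snd (Rees M J) (Some \<one>) s)" unfolding T0_def q0_def using tr_act[OF f S1] .
    also have "snd (Rees M J) (Some \<one>) s = (if \<one> \<otimes> s \<in> J then None else Some (\<one> \<otimes> s))"
      by (rule Rees_act_Some)
    finally show "snd T0 q0 s = f (if s \<in> J then None else Some s)" using s by simp
  qed
  have actz: "\<And>s. snd T0 z0 s = z0"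
  proof -
    fix s
    have "snd T0 z0 s = f (snd (Rees M J) None s)" unfolding T0_def z0_def using tr_act[OF f N] .
    thus "snd T0 z0 s = z0" unfolding z0_def by (simp add: Rees_act_None)
  qed
  have sh: "is_sheaf M (topF M J) (RR T0)" using hyp RR_sheaf[OF T0r] by blast
  have JF: "J \<in> topF M J" unfolding topF_def using J by blast
  have sep: "\<forall>x\<in>fst (RR T0). \<forall>x'\<in>fst (RR T0). (\<forall>y\<in>J. snd (RR T0) x y = snd (RR T0) x' y) \<longrightarrow> x = x'"
    using sh JF unfolding is_sheaf_def by blast
  have JM: "\<And>y. y \<in> J \<Longrightarrow> y \<in> carrier M" using J unfolding right_ideal_def by blast
  have "ee T0 q0 = ee T0 z0"
  proof -
    have "\<forall>y\<in>J. snd (RR T0) (ee T0 q0) y = snd (RR T0) (ee T0 z0) y"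
      using ee_act[OF T0r q0T] ee_act[OF T0r z0T] actq actz JM z0_def by simp
    moreover have "ee T0 q0 \<in> fst (RR T0)" "ee T0 z0 \<in> fst (RR T0)"
      using mhomD(1)[OF ee_hom[OF T0r]] q0T z0T by blast+
    ultimately show ?thesis using sep by blast
  qed
  hence e: "etaP (Pobj T0) (etaP T0 q0) = etaP (Pobj T0) (etaP T0 z0)"
    unfolding ee_def using inj_onD[OF PP_inj, of _ _ T0] etaP_mem[OF P_rmset[OF T0r] etaP_mem[OF T0r q0T]]
      etaP_mem[OF P_rmset[OF T0r] etaP_mem[OF T0r z0T]] by blast
  have ev: "\<And>x s t. s \<in> I \<Longrightarrow> t \<in> I \<Longrightarrow> etaP (Pobj T0) (etaP T0 x) s t = snd T0 x (s \<otimes> t)"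
    unfolding etaP_def Pobj_act using I_right I_carr by simp
  show ?thesis
  proof
    fix z assume z: "z \<in> I"
    then obtain s t where st: "s \<in> I" "t \<in> I" "z = s \<otimes> t" using I_split by blast
    have zM: "z \<in> carrier M" using z I_carr by blast
    have "snd T0 q0 z = snd T0 z0 z" using ev[OF st(1,2), of q0] ev[OF st(1,2), of z0] e st(3) by metis
    hence "f (if z \<in> J then None else Some z) = f None" using actq[OF zM] actz z0_def by simp
    moreover have "Some z \<in> fst (Rees M J) \<or> z \<in> J" using zM by (auto simp: Rees_def)
    ultimately show "z \<in> J"
    proof (cases "z \<in> J")
      case False
      assume h: "f (if z \<in> J then None else Some z) = f None" "Some z \<in> fst (Rees M J) \<or> z \<in> J"
      have "f (Some z) = f None" using h(1) False by simp
      hence "Some z = None" using inj_onD[OF f _ _ N] h(2) False by blast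
      thus ?thesis by simp
    qed
  qed
qed

end

unbundle cardinal_syntax

lemma inj_pair_ex:
  assumes inf: "infinite (UNIV :: 'u set)"
  shows "\<exists>pr :: 'u \<times> 'u \<Rightarrow> 'u. inj pr"
proof -
  have "|(UNIV::'u set) \<times> (UNIV::'u set)| =o |UNIV::'u set|"
    by (rule card_of_Times_same_infinite[OF inf])
  hence "|(UNIV::'u set) \<times> (UNIV::'u set)| \<le>o |UNIV::'u set|"
    by (rule ordIso_imp_ordLeq)
  hence "\<exists>f. inj_on f ((UNIV::'u set) \<times> (UNIV::'u set)) \<and> f ` ((UNIV::'u set) \<times> (UNIV::'u set)) \<subseteq> (UNIV::'u set)"
    by (rule card_of_ordLeq[THEN iffD2])
  then obtain f :: "'u \<times> 'u \<Rightarrow> 'u" where "inj_on f (UNIV \<times> UNIV)" by blast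
  hence "inj f" by simp
  thus ?thesis by blast
qed

lemma inj_fin_ex:
  assumes fin: "finite S" and inf: "infinite (UNIV :: 'u set)"
  shows "\<exists>f :: 'a \<Rightarrow> 'u. inj_on f S"
proof -
  obtain g :: "nat \<Rightarrow> 'u" where g: "inj g" using infinite_countable_subset[OF inf] by blast
  obtain h :: "'a \<Rightarrow> nat" and n where h: "inj_on h S" using finite_imp_inj_to_nat_seg[OF fin] by blast
  have "inj_on (g \<circ> h) S" by (rule comp_inj_on[OF h inj_on_subset[OF g subset_UNIV]])
  thus ?thesis by blast
qed

definition encl :: "('u \<times> 'u \<Rightarrow> 'u) \<Rightarrow> 'u \<Rightarrow> ('m \<times> 'm) list \<Rightarrow> ('m \<Rightarrow> 'm \<Rightarrow> 'u) \<Rightarrow> 'u" where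
  "encl pr u0 xs \<Phi> = foldr (\<lambda>k acc. pr (\<Phi> (fst k) (snd k), acc)) xs u0"

lemma encl_eq:
  assumes pr: "inj pr"
  shows "encl pr u0 xs \<Phi> = encl pr u0 xs \<Psi> \<Longrightarrow> \<forall>k\<in>set xs. \<Phi> (fst k) (snd k) = \<Psi> (fst k) (snd k)"
proof (induction xs)
  case Nil thus ?case by simp
next
  case (Cons k xs)
  have "pr (\<Phi> (fst k) (snd k), encl pr u0 xs \<Phi>) = pr (\<Psi> (fst k) (snd k), encl pr u0 xs \<Psi>)"
    using Cons.prems unfolding encl_def by simp
  hence "\<Phi> (fst k) (snd k) = \<Psi> (fst k) (snd k) \<and> encl pr u0 xs \<Phi> = encl pr u0 xs \<Psi>"
    using injD[OF pr] by blast
  thus ?case using Cons.IH by simp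
qed

lemma encl_inj:
  assumes pr: "inj pr" and xs: "set xs = I \<times> I"
  shows "inj_on (encl pr u0 xs) {\<Phi>. \<Phi> \<in> extensional I \<and> (\<forall>s\<in>I. \<Phi> s \<in> extensional I)}"
proof (rule inj_onI)
  fix \<Phi> \<Psi> assume P: "\<Phi> \<in> {\<Phi>. \<Phi> \<in> extensional I \<and> (\<forall>s\<in>I. \<Phi> s \<in> extensional I)}"
    and Q: "\<Psi> \<in> {\<Phi>. \<Phi> \<in> extensional I \<and> (\<forall>s\<in>I. \<Phi> s \<in> extensional I)}"
    and e: "encl pr u0 xs \<Phi> = encl pr u0 xs \<Psi>"
  have v: "\<And>s t. s \<in> I \<Longrightarrow> t \<in> I \<Longrightarrow> \<Phi> s t = \<Psi> s t" using encl_eq[OF pr e] xs by fastforce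
  show "\<Phi> = \<Psi>"
  proof (rule extensionalityI[of _ I])
    show "\<Phi> \<in> extensional I" "\<Psi> \<in> extensional I" using P Q by blast+
    fix s assume s: "s \<in> I"
    show "\<Phi> s = \<Psi> s" by (rule extensionalityI[of _ I]) (use P Q s v in auto)
  qed
qed

theorem main_bij:
  fixes M :: "'m monoid"
  assumes M: "monoid M" and fin: "finite (carrier M)" and inf: "infinite (UNIV :: 'u set)"
  shows "bij_betw (\<lambda>m. (Sh M (topF M m) :: ('u,'m) mobj set)) (idem_ideals M) (Loc M)"
proof -
  obtain emb :: "'m \<Rightarrow> 'u" where emb: "inj_on emb (carrier M)" using inj_fin_ex[OF fin inf] by blast
  obtain pr :: "'u \<times> 'u \<Rightarrow> 'u" where pr: "inj pr" using inj_pair_ex[OF inf] by blast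
  have idm: "\<And>m. m \<in> idem_ideals M \<Longrightarrow> idm M m"
    unfolding idem_ideals_def idm_def idm_axioms_def using M by blast
  have enc: "\<And>m. m \<in> idem_ideals M \<Longrightarrow> \<exists>enc :: ('m \<Rightarrow> 'm \<Rightarrow> 'u) \<Rightarrow> 'u.
      inj_on enc {\<Phi>. \<Phi> \<in> extensional m \<and> (\<forall>s\<in>m. \<Phi> s \<in> extensional m)}"
  proof -
    fix m assume m: "m \<in> idem_ideals M"
    have "m \<subseteq> carrier M" using m unfolding idem_ideals_def two_sided_ideal_def right_ideal_def by blast
    hence "finite (m \<times> m)" using fin finite_subset by blast
    then obtain xs where "set xs = m \<times> m" using finite_list by blast
    thus "\<exists>enc :: ('m \<Rightarrow> 'm \<Rightarrow> 'u) \<Rightarrow> 'u. inj_on enc {\<Phi>. \<Phi> \<in> extensional m \<and> (\<forall>s\<in>m. \<Phi> s \<in> extensional m)}"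
      using encl_inj[OF pr] by blast
  qed
  have loc: "\<And>m. m \<in> idem_ideals M \<Longrightarrow> (Sh M (topF M m) :: ('u,'m) mobj set) \<in> Loc M"
  proof -
    fix m assume m: "m \<in> idem_ideals M"
    obtain e :: "('m \<Rightarrow> 'm \<Rightarrow> 'u) \<Rightarrow> 'u" where e: "inj_on e {\<Phi>. \<Phi> \<in> extensional m \<and> (\<forall>s\<in>m. \<Phi> s \<in> extensional m)}"
      using enc[OF m] by blast
    interpret idm M m using idm[OF m] .
    interpret U: idmu M m e emb by unfold_locales (rule e, rule emb)
    show "(Sh M (topF M m) :: ('u,'m) mobj set) \<in> Loc M" unfolding Loc_def using U.localising_Sh by simp
  qed
  have sub: "\<And>m1 m2. m1 \<in> idem_ideals M \<Longrightarrow> m2 \<in> idem_ideals M \<Longrightarrow>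
      (Sh M (topF M m1) :: ('u,'m) mobj set) = Sh M (topF M m2) \<Longrightarrow> m1 \<subseteq> m2"
  proof -
    fix m1 m2 assume m1: "m1 \<in> idem_ideals M" and m2: "m2 \<in> idem_ideals M"
      and eq: "(Sh M (topF M m1) :: ('u,'m) mobj set) = Sh M (topF M m2)"
    obtain e :: "('m \<Rightarrow> 'm \<Rightarrow> 'u) \<Rightarrow> 'u" where e: "inj_on e {\<Phi>. \<Phi> \<in> extensional m1 \<and> (\<forall>s\<in>m1. \<Phi> s \<in> extensional m1)}"
      using enc[OF m1] by blast
    interpret idm M m1 using idm[OF m1] .
    interpret U: idmu M m1 e emb by unfold_locales (rule e, rule emb)
    have J: "right_ideal M m2" using m2 unfolding idem_ideals_def two_sided_ideal_def by blast
    obtain f :: "'m option \<Rightarrow> 'u" where f: "inj_on f (fst (Rees M m2))"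
      using inj_fin_ex[OF Rees_fin[OF fin] inf] by blast
    show "m1 \<subseteq> m2"
    proof (rule U.Sh_sub[OF J f])
      fix X :: "('u,'m) mobj" assume "is_sheaf M (topF M m1) X"
      thus "is_sheaf M (topF M m2) X" using eq unfolding Sh_def by blast
    qed
  qed
  have surj: "\<And>L. L \<in> Loc M \<Longrightarrow> \<exists>m\<in>idem_ideals M. L = (Sh M (topF M m) :: ('u,'m) mobj set)"
  proof -
    fix L :: "('u,'m) mobj set" assume "L \<in> Loc M"
    hence l: "localising M L" unfolding Loc_def by simp
    then obtain R \<eta> where fr: "full_replete M L" and r: "is_reflection M L R \<eta>"
      and pb: "\<forall>P p1 p2 A B C f g. is_pullback M P p1 p2 A B C f g \<longrightarrow>
            is_pullback M (R P) (refl_mor M R \<eta> P A p1) (refl_mor M R \<eta> P B p2)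
              (R A) (R B) (R C) (refl_mor M R \<eta> A C f) (refl_mor M R \<eta> B C g)"
      unfolding localising_def by blast
    have lb: "locB M L R \<eta> emb pr" unfolding locB_def locB_axioms_def using M fr r pb emb pr fin by blast
    interpret B: locB M L R \<eta> emb pr by (rule lb)
    show "\<exists>m\<in>idem_ideals M. L = (Sh M (topF M m) :: ('u,'m) mobj set)" using B.L_idem by blast
  qed
  show ?thesis unfolding bij_betw_def
  proof
    show "inj_on (\<lambda>m. (Sh M (topF M m) :: ('u,'m) mobj set)) (idem_ideals M)"
      by (rule inj_onI) (metis sub subset_antisym)
    show "(\<lambda>m. (Sh M (topF M m) :: ('u,'m) mobj set)) ` idem_ideals M = Loc M"
      using loc surj by blast
  qed
qed

lemma opm_carrier[simp]: "carrier (opm M) = carrier M" by (simp add: opm_def)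
lemma opm_mult[simp]: "x \<otimes>\<^bsub>opm M\<^esub> y = y \<otimes>\<^bsub>M\<^esub> x" by (simp add: opm_def)
lemma opm_one[simp]: "\<one>\<^bsub>opm M\<^esub> = \<one>\<^bsub>M\<^esub>" by (simp add: opm_def)

lemma opm_monoid: "monoid M \<Longrightarrow> monoid (opm M)"
  unfolding monoid_def by (simp add: opm_def)

lemma opm_two: "two_sided_ideal (opm M) a \<longleftrightarrow> two_sided_ideal M a"
  unfolding two_sided_ideal_def right_ideal_def by auto

lemma set_swap: "{y \<otimes>\<^bsub>M\<^esub> x | x y. x \<in> a \<and> y \<in> a} = {x \<otimes>\<^bsub>M\<^esub> y | x y. x \<in> a \<and> y \<in> a}"
  by blast

lemma opm_idem: "idem_ideals (opm M) = idem_ideals M"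
  unfolding idem_ideals_def opm_two opm_mult set_swap ..

lemma idem_fin: "finite (carrier M) \<Longrightarrow> finite (idem_ideals M)"
  by (rule finite_subset[of _ "Pow (carrier M)"])
     (auto simp: idem_ideals_def two_sided_ideal_def right_ideal_def)

theorem mainTheorem15:
  fixes M :: "'m monoid"
  assumes "monoid M" and "finite (carrier M)" and "infinite (UNIV :: 'u set)"
  shows "bij_betw (\<lambda>m. (Sh M (topF M m) :: ('u,'m) mobj set)) (idem_ideals M) (Loc M)
         \<and> finite (Loc M :: ('u,'m) mobj set set)
         \<and> card (Loc M :: ('u,'m) mobj set set) = card (Loc (opm M) :: ('u,'m) mobj set set)"
proof -
  have b1: "bij_betw (\<lambda>m. (Sh M (topF M m) :: ('u,'m) mobj set)) (idem_ideals M) (Loc M)"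
    using main_bij[OF assms] .
  have b2: "bij_betw (\<lambda>m. (Sh (opm M) (topF (opm M) m) :: ('u,'m) mobj set)) (idem_ideals (opm M)) (Loc (opm M))"
    using main_bij[OF opm_monoid[OF assms(1)] _ assms(3)] assms(2) by simp
  have f: "finite (idem_ideals M)" using idem_fin[OF assms(2)] .
  have "finite (Loc M :: ('u,'m) mobj set set)" using bij_betw_finite[OF b1] f by simp
  moreover have "card (Loc M :: ('u,'m) mobj set set) = card (idem_ideals M)" using bij_betw_same_card[OF b1] by simp
  moreover have "card (Loc (opm M) :: ('u,'m) mobj set set) = card (idem_ideals M)"
  proof -
    have "card (Loc (opm M) :: ('u,'m) mobj set set) = card (idem_ideals (opm M))"
      using bij_betw_same_card[OF b2] by simp
    also have "\<dots> = card (idem_ideals M)" by (simp only: opm_idem)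
    finally show ?thesis .
  qed
  ultimately show ?thesis using b1 by simp
qed


end
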